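(* There is a polynomial-time algorithm for Interval Scheduling with Colors.
   Context: Interval Scheduling with Colors: the input is a finite set of jobs with weights $w\ge0$, where each job $j$ has two half-open intervals $[\ell_j,r_j)$ and $[a_j,b_j)$ with $\ell_j\le a_j<b_j\le r_j$; the inner interval $[a_j,b_j)$ is called red and $[\ell_j,r_j)\setminus[a_j,b_j)$ blue. A set $S$ of jobs is feasible if for any two distinct jobs $j,k\in S$, $[a_j,b_j)\cap[\ell_k,r_k)=\emptyset$ and $[a_k,b_k)\cap[\ell_j,r_j)=\emptyset$ (the red interval of a chosen job meets neither the red nor the blue interval of another chosen job). The task is to find a feasible set of maximum total weight. *)

theory Defs
  imports Main "HOL.Real"
begin

text \<open>A job j: outer interval [l_j, r_j), red inner interval [a_j, b_j), weight w_j.\<close>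
record job =
  lft :: real
  ra  :: real
  rb  :: real
  rgt :: real
  wt  :: real

definition valid_job :: "job \<Rightarrow> bool" where
  "valid_job j \<longleftrightarrow> lft j \<le> ra j \<and> ra j < rb j \<and> rb j \<le> rgt j \<and> wt j \<ge> 0"

text \<open>Jobs of an instance are indexed by 0..<length js (repeated data = distinct jobs).\<close>
definition feasible :: "job list \<Rightarrow> nat set \<Rightarrow> bool" where
  "feasible js S \<longleftrightarrow> S \<subseteq> {0..<length js} \<and>
     (\<forall>j\<in>S. \<forall>k\<in>S. j \<noteq> k \<longrightarrow>
        {ra (js!j)..<rb (js!j)} \<inter> {lft (js!k)..<rgt (js!k)} = {} \<and>
        {ra (js!k)..<rb (js!k)} \<inter> {lft (js!j)..<rgt (js!j)} = {})"

definition weight :: "job list \<Rightarrow> nat set \<Rightarrow> real" where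
  "weight js S = (\<Sum>j\<in>S. wt (js!j))"

definition optimal :: "job list \<Rightarrow> nat set \<Rightarrow> bool" where
  "optimal js S \<longleftrightarrow> feasible js S \<and> (\<forall>T. feasible js T \<longrightarrow> weight js T \<le> weight js S)"

datatype instr =
    NConst nat nat
  | NAdd nat nat nat
  | NSub nat nat nat
  | NLoad nat nat
  | NStore nat nat
  | RConst nat real
  | RAdd nat nat nat
  | RSub nat nat nat
  | RLoad nat nat
  | RStore nat nat
  | Jmp nat
  | JmpZ nat nat
  | JmpLe nat nat nat
  | Halt

record mstate =
  pc   :: nat
  nreg :: "nat \<Rightarrow> nat"
  rreg :: "nat \<Rightarrow> real"

fun exec :: "instr \<Rightarrow> mstate \<Rightarrow> mstate" where
  "exec (NConst i c) s = s\<lparr>pc := Suc (pc s), nreg := (nreg s)(i := c)\<rparr>"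
| "exec (NAdd i j k) s = s\<lparr>pc := Suc (pc s), nreg := (nreg s)(i := nreg s j + nreg s k)\<rparr>"
| "exec (NSub i j k) s = s\<lparr>pc := Suc (pc s), nreg := (nreg s)(i := nreg s j - nreg s k)\<rparr>"
| "exec (NLoad i j) s = s\<lparr>pc := Suc (pc s), nreg := (nreg s)(i := nreg s (nreg s j))\<rparr>"
| "exec (NStore i j) s = s\<lparr>pc := Suc (pc s), nreg := (nreg s)(nreg s i := nreg s j)\<rparr>"
| "exec (RConst i c) s = s\<lparr>pc := Suc (pc s), rreg := (rreg s)(i := c)\<rparr>"
| "exec (RAdd i j k) s = s\<lparr>pc := Suc (pc s), rreg := (rreg s)(i := rreg s j + rreg s k)\<rparr>"
| "exec (RSub i j k) s = s\<lparr>pc := Suc (pc s), rreg := (rreg s)(i := rreg s j - rreg s k)\<rparr>"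
| "exec (RLoad i j) s = s\<lparr>pc := Suc (pc s), rreg := (rreg s)(i := rreg s (nreg s j))\<rparr>"
| "exec (RStore i j) s = s\<lparr>pc := Suc (pc s), rreg := (rreg s)(nreg s i := rreg s j)\<rparr>"
| "exec (Jmp t) s = s\<lparr>pc := t\<rparr>"
| "exec (JmpZ i t) s = s\<lparr>pc := (if nreg s i = 0 then t else Suc (pc s))\<rparr>"
| "exec (JmpLe i j t) s = s\<lparr>pc := (if rreg s i \<le> rreg s j then t else Suc (pc s))\<rparr>"
| "exec Halt s = s"

definition halted :: "instr list \<Rightarrow> mstate \<Rightarrow> bool" where
  "halted P s \<longleftrightarrow> length P \<le> pc s \<or> P ! pc s = Halt"

definition step :: "instr list \<Rightarrow> mstate \<Rightarrow> mstate" where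
  "step P s = (if halted P s then s else exec (P ! pc s) s)"

definition run :: "instr list \<Rightarrow> nat \<Rightarrow> mstate \<Rightarrow> mstate" where
  "run P k s = (step P ^^ k) s"

definition job_field :: "nat \<Rightarrow> job \<Rightarrow> real" where
  "job_field m j = (if m = 0 then lft j else if m = 1 then ra j else if m = 2 then rb j
                    else if m = 3 then rgt j else wt j)"

definition init :: "job list \<Rightarrow> mstate" where
  "init js = \<lparr>pc = 0,
              nreg = (\<lambda>i. if i = 0 then length js else 0),
              rreg = (\<lambda>i. if i < 5 * length js then job_field (i mod 5) (js ! (i div 5)) else 0)\<rparr>"

definition out_set :: "nat \<Rightarrow> mstate \<Rightarrow> nat set" where
  "out_set n s = {i. i < n \<and> nreg s (Suc i) \<noteq> 0}"

definition solves_ISC_polytime :: "instr list \<Rightarrow> bool" where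
  "solves_ISC_polytime P \<longleftrightarrow> (\<exists>c d :: nat. \<forall>js. (\<forall>j\<in>set js. valid_job j) \<longrightarrow>
     (\<exists>k \<le> c * (length js + 1) ^ d.
        halted P (run P k (init js)) \<and> optimal js (out_set (length js) (run P k (init js)))))"

end

theory Submission
  imports Defs
begin


definition rel :: "job list \<Rightarrow> nat \<Rightarrow> nat \<Rightarrow> bool" where
  "rel js j k \<longleftrightarrow> rgt (js!j) \<le> ra (js!k) \<and> rb (js!j) \<le> lft (js!k)"

definition chain :: "job list \<Rightarrow> nat set \<Rightarrow> bool" where
  "chain js S \<longleftrightarrow> S \<subseteq> {0..<length js} \<and> (\<forall>j\<in>S. \<forall>k\<in>S. j \<noteq> k \<longrightarrow> rel js j k \<or> rel js k j)"

definition ctop :: "job list \<Rightarrow> nat set \<Rightarrow> nat \<Rightarrow> bool" where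
  "ctop js S k \<longleftrightarrow> chain js S \<and> k \<in> S \<and> (\<forall>j\<in>S. j \<noteq> k \<longrightarrow> rel js j k)"

definition isbest :: "job list \<Rightarrow> nat \<Rightarrow> real \<Rightarrow> bool" where
  "isbest js k v \<longleftrightarrow> (\<exists>S. ctop js S k \<and> weight js S = v) \<and> (\<forall>S. ctop js S k \<longrightarrow> weight js S \<le> v)"

definition allvalid :: "job list \<Rightarrow> bool" where
  "allvalid js \<longleftrightarrow> (\<forall>j<length js. valid_job (js!j))"

lemma allvalidD: "allvalid js \<Longrightarrow> j < length js \<Longrightarrow>
   lft (js!j) \<le> ra (js!j) \<and> ra (js!j) < rb (js!j) \<and> rb (js!j) \<le> rgt (js!j) \<and> wt (js!j) \<ge> 0"
  unfolding allvalid_def valid_job_def by blast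

lemma rel_less: "allvalid js \<Longrightarrow> j < length js \<Longrightarrow> k < length js \<Longrightarrow> rel js j k \<Longrightarrow> ra (js!j) < ra (js!k)"
  using allvalidD[of js j] allvalidD[of js k] unfolding rel_def by linarith

lemma rel_irrefl: "allvalid js \<Longrightarrow> j < length js \<Longrightarrow> \<not> rel js j j"
  using rel_less by blast

lemma rel_trans: "allvalid js \<Longrightarrow> i < length js \<Longrightarrow> j < length js \<Longrightarrow> k < length js \<Longrightarrow>
    rel js i j \<Longrightarrow> rel js j k \<Longrightarrow> rel js i k"
  using allvalidD[of js i] allvalidD[of js j] allvalidD[of js k] unfolding rel_def by linarith

lemma ivl_disj:
  fixes a b c d :: real
  assumes "a < b" "c < d"
  shows "{a..<b} \<inter> {c..<d} = {} \<longleftrightarrow> b \<le> c \<or> d \<le> a"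
proof
  assume h: "{a..<b} \<inter> {c..<d} = {}"
  show "b \<le> c \<or> d \<le> a"
  proof (rule ccontr)
    assume "\<not> (b \<le> c \<or> d \<le> a)"
    then have "max a c \<in> {a..<b} \<inter> {c..<d}" using assms by auto
    then show False using h by blast
  qed
qed auto

lemma pair_feasible:
  assumes "allvalid js" "j < length js" "k < length js"
  shows "({ra (js!j)..<rb (js!j)} \<inter> {lft (js!k)..<rgt (js!k)} = {} \<and>
          {ra (js!k)..<rb (js!k)} \<inter> {lft (js!j)..<rgt (js!j)} = {})
     \<longleftrightarrow> rel js j k \<or> rel js k j"
proof -
  have vj: "lft (js!j) \<le> ra (js!j) \<and> ra (js!j) < rb (js!j) \<and> rb (js!j) \<le> rgt (js!j)"
    using allvalidD[OF assms(1,2)] by blast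
  have vk: "lft (js!k) \<le> ra (js!k) \<and> ra (js!k) < rb (js!k) \<and> rb (js!k) \<le> rgt (js!k)"
    using allvalidD[OF assms(1,3)] by blast
  have e1: "{ra (js!j)..<rb (js!j)} \<inter> {lft (js!k)..<rgt (js!k)} = {} \<longleftrightarrow>
      rb (js!j) \<le> lft (js!k) \<or> rgt (js!k) \<le> ra (js!j)"
    by (rule ivl_disj) (use vj vk in linarith)+
  have e2: "{ra (js!k)..<rb (js!k)} \<inter> {lft (js!j)..<rgt (js!j)} = {} \<longleftrightarrow>
      rb (js!k) \<le> lft (js!j) \<or> rgt (js!j) \<le> ra (js!k)"
    by (rule ivl_disj) (use vj vk in linarith)+
  show ?thesis unfolding e1 e2 rel_def
  proof
    assume "(rb (js ! j) \<le> lft (js ! k) \<or> rgt (js ! k) \<le> ra (js ! j)) \<and>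
      (rb (js ! k) \<le> lft (js ! j) \<or> rgt (js ! j) \<le> ra (js ! k))"
    then show "rgt (js ! j) \<le> ra (js ! k) \<and> rb (js ! j) \<le> lft (js ! k) \<or>
      rgt (js ! k) \<le> ra (js ! j) \<and> rb (js ! k) \<le> lft (js ! j)"
      using vj vk by (elim conjE disjE) linarith+
  qed (use vj vk in linarith)
qed

lemma feasible_chain: "allvalid js \<Longrightarrow> feasible js S \<longleftrightarrow> chain js S"
proof -
  assume av: "allvalid js"
  have *: "S \<subseteq> {0..<length js} \<Longrightarrow> j \<in> S \<Longrightarrow> k \<in> S \<Longrightarrow>
    ({ra (js!j)..<rb (js!j)} \<inter> {lft (js!k)..<rgt (js!k)} = {} \<and>
          {ra (js!k)..<rb (js!k)} \<inter> {lft (js!j)..<rgt (js!j)} = {})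
     \<longleftrightarrow> rel js j k \<or> rel js k j" for j k
  proof -
    assume "S \<subseteq> {0..<length js}" "j \<in> S" "k \<in> S"
    then have "j < length js" "k < length js" by auto
    then show ?thesis by (rule pair_feasible[OF av])
  qed
  show ?thesis unfolding feasible_def chain_def
  proof
    assume h: "S \<subseteq> {0..<length js} \<and> (\<forall>j\<in>S. \<forall>k\<in>S. j \<noteq> k \<longrightarrow>
        {ra (js!j)..<rb (js!j)} \<inter> {lft (js!k)..<rgt (js!k)} = {} \<and>
        {ra (js!k)..<rb (js!k)} \<inter> {lft (js!j)..<rgt (js!j)} = {})"
    then show "S \<subseteq> {0..<length js} \<and> (\<forall>j\<in>S. \<forall>k\<in>S. j \<noteq> k \<longrightarrow> rel js j k \<or> rel js k j)"
      using * by blast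
  next
    assume h: "S \<subseteq> {0..<length js} \<and> (\<forall>j\<in>S. \<forall>k\<in>S. j \<noteq> k \<longrightarrow> rel js j k \<or> rel js k j)"
    then show "S \<subseteq> {0..<length js} \<and> (\<forall>j\<in>S. \<forall>k\<in>S. j \<noteq> k \<longrightarrow>
        {ra (js!j)..<rb (js!j)} \<inter> {lft (js!k)..<rgt (js!k)} = {} \<and>
        {ra (js!k)..<rb (js!k)} \<inter> {lft (js!j)..<rgt (js!j)} = {})"
      using * by blast
  qed
qed

lemma chain_finite: "chain js S \<Longrightarrow> finite S"
  unfolding chain_def using finite_subset by blast

lemma chain_subset: "chain js S \<Longrightarrow> T \<subseteq> S \<Longrightarrow> chain js T"
  unfolding chain_def by blast

lemma chain_has_top:
  assumes "allvalid js" "chain js S" "S \<noteq> {}"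
  shows "\<exists>k. ctop js S k"
proof -
  have fin: "finite S" using chain_finite[OF assms(2)] .
  define f where "f = (\<lambda>j. ra (js!j))"
  obtain k where k: "k \<in> S" "\<forall>j\<in>S. f j \<le> f k"
  proof -
    have "Max (f ` S) \<in> f ` S" using fin assms(3) by simp
    then obtain k where "k \<in> S" "f k = Max (f ` S)" by auto
    moreover have "\<forall>j\<in>S. f j \<le> Max (f ` S)" using fin by simp
    ultimately show ?thesis using that by auto
  qed
  have "\<forall>j\<in>S. j \<noteq> k \<longrightarrow> rel js j k"
  proof (intro ballI impI)
    fix j assume j: "j \<in> S" "j \<noteq> k"
    have lt: "j < length js" "k < length js" using assms(2) j k unfolding chain_def by auto
    have "rel js j k \<or> rel js k j" using assms(2) j k unfolding chain_def by blast
    moreover have "\<not> rel js k j" using rel_less[OF assms(1) lt(2) lt(1)] k j unfolding f_def by force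
    ultimately show "rel js j k" by blast
  qed
  then show ?thesis using assms(2) k unfolding ctop_def by blast
qed

lemma weight_insert: "finite S \<Longrightarrow> k \<notin> S \<Longrightarrow> weight js (insert k S) = wt (js!k) + weight js S"
  unfolding weight_def by simp

lemma weight_nonneg: "allvalid js \<Longrightarrow> chain js S \<Longrightarrow> 0 \<le> weight js S"
  unfolding weight_def chain_def using allvalidD[of js]
  by (intro sum_nonneg) auto

lemma dp_step:
  assumes av: "allvalid js" and k: "k < length js"
    and relP: "\<And>j. j < length js \<Longrightarrow> rel js j k \<Longrightarrow> j \<in> P"
    and best: "\<And>j. j \<in> P \<Longrightarrow> isbest js j (ov j)"
    and Mge: "0 \<le> M"
    and Mach: "(M = 0) \<or> (\<exists>j. j < length js \<and> rel js j k \<and> M = ov j)"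
    and Mub: "\<And>j. j < length js \<Longrightarrow> rel js j k \<Longrightarrow> ov j \<le> M"
  shows "isbest js k (wt (js!k) + M)"
  unfolding isbest_def
proof (intro conjI allI impI)
  show "\<exists>S. ctop js S k \<and> weight js S = wt (js!k) + M"
    using Mach
  proof
    assume "M = 0"
    have "ctop js {k} k" using k unfolding ctop_def chain_def by auto
    moreover have "weight js {k} = wt (js!k)" unfolding weight_def by simp
    ultimately show ?thesis using \<open>M = 0\<close> by auto
  next
    assume "\<exists>j. j < length js \<and> rel js j k \<and> M = ov j"
    then obtain j where j: "j < length js" "rel js j k" "M = ov j" by blast
    then have "isbest js j (ov j)" using best relP by blast
    then obtain S where S: "ctop js S j" "weight js S = ov j" unfolding isbest_def by blast
    have Sl: "S \<subseteq> {0..<length js}" using S(1) unfolding ctop_def chain_def by blast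
    have relS: "\<forall>i\<in>S. rel js i k"
    proof
      fix i assume i: "i \<in> S"
      show "rel js i k"
      proof (cases "i = j")
        case True then show ?thesis using j by simp
      next
        case False
        then have "rel js i j" using S(1) i unfolding ctop_def by blast
        then show ?thesis using rel_trans[OF av _ j(1) k _ j(2)] i Sl by auto
      qed
    qed
    have kS: "k \<notin> S" using relS rel_irrefl[OF av k] by blast
    have "ctop js (insert k S) k"
      using S(1) relS k unfolding ctop_def chain_def by auto
    moreover have "weight js (insert k S) = wt (js!k) + M"
      using weight_insert[OF chain_finite kS] S j(3) unfolding ctop_def by auto
    ultimately show ?thesis by blast
  qed
next
  fix S assume S: "ctop js S k"
  have fin: "finite S" using S chain_finite unfolding ctop_def by blast
  have w: "weight js S = wt (js!k) + weight js (S - {k})"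
    using fin S unfolding ctop_def weight_def by (meson sum.remove)
  have ch: "chain js (S - {k})" using S chain_subset unfolding ctop_def by blast
  show "weight js S \<le> wt (js!k) + M"
  proof (cases "S - {k} = {}")
    case True
    then show ?thesis using w Mge unfolding weight_def by (simp only:) simp
  next
    case False
    then obtain j where j: "ctop js (S - {k}) j" using chain_has_top[OF av ch] by blast
    have jS: "j \<in> S" "j \<noteq> k" using j unfolding ctop_def by auto
    have jl: "j < length js" using jS S unfolding ctop_def chain_def by auto
    have rjk: "rel js j k" using S jS unfolding ctop_def by blast
    have "weight js (S - {k}) \<le> ov j" using best[OF relP[OF jl rjk]] j unfolding isbest_def by blast
    also have "ov j \<le> M" using Mub[OF jl rjk] .
    finally show ?thesis using w by simp
  qed
qed

lemma isbest_unique: "isbest js k v \<Longrightarrow> isbest js k v' \<Longrightarrow> v = v'"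
  unfolding isbest_def by (meson order_antisym)

lemma best_bound:
  assumes av: "allvalid js" and best: "\<And>j. j < length js \<Longrightarrow> isbest js j (ov j)"
    and ub: "\<And>j. j < length js \<Longrightarrow> ov j \<le> G" and G: "0 \<le> G" and T: "feasible js T"
  shows "weight js T \<le> G"
proof -
  have ch: "chain js T" using T feasible_chain[OF av] by blast
  show ?thesis
  proof (cases "T = {}")
    case True then show ?thesis using G unfolding weight_def by simp
  next
    case False
    then obtain k where k: "ctop js T k" using chain_has_top[OF av ch] by blast
    have kl: "k < length js" using k unfolding ctop_def chain_def by auto
    have "weight js T \<le> ov k" using best[OF kl] k unfolding isbest_def by blast
    then show ?thesis using ub[OF kl] by simp
  qed
qed




definition prog :: "instr list" where
  "prog = [NConst 1 1,
    NConst 2 5,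
    NConst 15 0,
    NConst 3 20,
    NAdd 3 3 0,
    NAdd 3 3 0,
    NAdd 3 3 0,
    NAdd 3 3 0,
    NAdd 3 3 0,
    NConst 4 20,
    NAdd 4 4 0,
    NAdd 5 4 0,
    NAdd 6 5 0,
    NConst 8 0,
    NAdd 9 3 15,
    NConst 12 20,
    NSub 12 3 12,
    JmpZ 12 24,
    RLoad 0 8,
    RStore 9 0,
    NAdd 8 8 1,
    NAdd 9 9 1,
    NSub 12 12 1,
    Jmp 17,
    RConst 5 0,
    RConst 4 0,
    NConst 14 0,
    NAdd 7 0 15,
    JmpZ 7 91,
    NConst 10 0,
    NConst 8 0,
    NAdd 9 3 15,
    NSub 12 0 8,
    JmpZ 12 48,
    NAdd 12 4 8,
    NLoad 12 12,
    JmpZ 12 38,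
    Jmp 45,
    NAdd 12 9 1,
    RLoad 0 12,
    JmpZ 10 42,
    JmpLe 2 0 45,
    NAdd 10 8 1,
    NAdd 11 9 15,
    RAdd 2 0 5,
    NAdd 8 8 1,
    NAdd 9 9 2,
    Jmp 32,
    NSub 10 10 1,
    NAdd 12 4 10,
    NStore 12 1,
    NAdd 12 11 1,
    RLoad 6 12,
    RLoad 7 11,
    RConst 3 0,
    NConst 13 0,
    NConst 8 0,
    NAdd 9 3 15,
    NSub 12 0 8,
    JmpZ 12 79,
    NConst 12 3,
    NAdd 12 9 12,
    RLoad 0 12,
    JmpLe 0 6 65,
    Jmp 76,
    NConst 12 2,
    NAdd 12 9 12,
    RLoad 0 12,
    JmpLe 0 7 70,
    Jmp 76,
    NConst 12 4,
    NAdd 12 9 12,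
    RLoad 0 12,
    JmpLe 0 3 76,
    RAdd 3 0 5,
    NAdd 13 8 1,
    NAdd 8 8 1,
    NAdd 9 9 2,
    Jmp 58,
    NConst 12 4,
    NAdd 12 11 12,
    RLoad 0 12,
    RAdd 0 0 3,
    RStore 12 0,
    NAdd 12 5 10,
    NStore 12 13,
    JmpLe 0 4 89,
    RAdd 4 0 5,
    NAdd 14 10 1,
    NSub 7 7 1,
    Jmp 28,
    NAdd 10 14 15,
    JmpZ 10 99,
    NSub 12 10 1,
    NAdd 13 6 12,
    NStore 13 1,
    NAdd 13 5 12,
    NLoad 10 13,
    Jmp 92,
    NAdd 8 0 15,
    NConst 12 15,
    NSub 12 8 12,
    JmpZ 12 109,
    NAdd 13 6 8,
    NSub 13 13 1,
    NLoad 12 13,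
    NStore 8 12,
    NSub 8 8 1,
    Jmp 100,
    NAdd 0 6 15,
    NConst 15 1,
    NLoad 1 0,
    NAdd 0 0 15,
    NLoad 2 0,
    NAdd 0 0 15,
    NLoad 3 0,
    NAdd 0 0 15,
    NLoad 4 0,
    NAdd 0 0 15,
    NLoad 5 0,
    NAdd 0 0 15,
    NLoad 6 0,
    NAdd 0 0 15,
    NLoad 7 0,
    NAdd 0 0 15,
    NLoad 8 0,
    NAdd 0 0 15,
    NLoad 9 0,
    NAdd 0 0 15,
    NLoad 10 0,
    NAdd 0 0 15,
    NLoad 11 0,
    NAdd 0 0 15,
    NLoad 12 0,
    NAdd 0 0 15,
    NLoad 13 0,
    NAdd 0 0 15,
    NLoad 14 0,
    NAdd 0 0 15,
    NLoad 15 0,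
    Halt]"

lemma prog_length: "length prog = 141" by (simp add: prog_def)

lemma prog_nth:
  "prog ! 0 = NConst 1 1"
  "prog ! Suc 0 = NConst 2 5"
  "prog ! 2 = NConst 15 0"
  "prog ! 3 = NConst 3 20"
  "prog ! 4 = NAdd 3 3 0"
  "prog ! 5 = NAdd 3 3 0"
  "prog ! 6 = NAdd 3 3 0"
  "prog ! 7 = NAdd 3 3 0"
  "prog ! 8 = NAdd 3 3 0"
  "prog ! 9 = NConst 4 20"
  "prog ! 10 = NAdd 4 4 0"
  "prog ! 11 = NAdd 5 4 0"
  "prog ! 12 = NAdd 6 5 0"
  "prog ! 13 = NConst 8 0"
  "prog ! 14 = NAdd 9 3 15"
  "prog ! 15 = NConst 12 20"
  "prog ! 16 = NSub 12 3 12"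
  "prog ! 17 = JmpZ 12 24"
  "prog ! 18 = RLoad 0 8"
  "prog ! 19 = RStore 9 0"
  "prog ! 20 = NAdd 8 8 1"
  "prog ! 21 = NAdd 9 9 1"
  "prog ! 22 = NSub 12 12 1"
  "prog ! 23 = Jmp 17"
  "prog ! 24 = RConst 5 0"
  "prog ! 25 = RConst 4 0"
  "prog ! 26 = NConst 14 0"
  "prog ! 27 = NAdd 7 0 15"
  "prog ! 28 = JmpZ 7 91"
  "prog ! 29 = NConst 10 0"
  "prog ! 30 = NConst 8 0"
  "prog ! 31 = NAdd 9 3 15"
  "prog ! 32 = NSub 12 0 8"
  "prog ! 33 = JmpZ 12 48"
  "prog ! 34 = NAdd 12 4 8"
  "prog ! 35 = NLoad 12 12"
  "prog ! 36 = JmpZ 12 38"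
  "prog ! 37 = Jmp 45"
  "prog ! 38 = NAdd 12 9 1"
  "prog ! 39 = RLoad 0 12"
  "prog ! 40 = JmpZ 10 42"
  "prog ! 41 = JmpLe 2 0 45"
  "prog ! 42 = NAdd 10 8 1"
  "prog ! 43 = NAdd 11 9 15"
  "prog ! 44 = RAdd 2 0 5"
  "prog ! 45 = NAdd 8 8 1"
  "prog ! 46 = NAdd 9 9 2"
  "prog ! 47 = Jmp 32"
  "prog ! 48 = NSub 10 10 1"
  "prog ! 49 = NAdd 12 4 10"
  "prog ! 50 = NStore 12 1"
  "prog ! 51 = NAdd 12 11 1"
  "prog ! 52 = RLoad 6 12"
  "prog ! 53 = RLoad 7 11"
  "prog ! 54 = RConst 3 0"
  "prog ! 55 = NConst 13 0"
  "prog ! 56 = NConst 8 0"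
  "prog ! 57 = NAdd 9 3 15"
  "prog ! 58 = NSub 12 0 8"
  "prog ! 59 = JmpZ 12 79"
  "prog ! 60 = NConst 12 3"
  "prog ! 61 = NAdd 12 9 12"
  "prog ! 62 = RLoad 0 12"
  "prog ! 63 = JmpLe 0 6 65"
  "prog ! 64 = Jmp 76"
  "prog ! 65 = NConst 12 2"
  "prog ! 66 = NAdd 12 9 12"
  "prog ! 67 = RLoad 0 12"
  "prog ! 68 = JmpLe 0 7 70"
  "prog ! 69 = Jmp 76"
  "prog ! 70 = NConst 12 4"
  "prog ! 71 = NAdd 12 9 12"
  "prog ! 72 = RLoad 0 12"
  "prog ! 73 = JmpLe 0 3 76"
  "prog ! 74 = RAdd 3 0 5"
  "prog ! 75 = NAdd 13 8 1"
  "prog ! 76 = NAdd 8 8 1"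
  "prog ! 77 = NAdd 9 9 2"
  "prog ! 78 = Jmp 58"
  "prog ! 79 = NConst 12 4"
  "prog ! 80 = NAdd 12 11 12"
  "prog ! 81 = RLoad 0 12"
  "prog ! 82 = RAdd 0 0 3"
  "prog ! 83 = RStore 12 0"
  "prog ! 84 = NAdd 12 5 10"
  "prog ! 85 = NStore 12 13"
  "prog ! 86 = JmpLe 0 4 89"
  "prog ! 87 = RAdd 4 0 5"
  "prog ! 88 = NAdd 14 10 1"
  "prog ! 89 = NSub 7 7 1"
  "prog ! 90 = Jmp 28"
  "prog ! 91 = NAdd 10 14 15"
  "prog ! 92 = JmpZ 10 99"
  "prog ! 93 = NSub 12 10 1"
  "prog ! 94 = NAdd 13 6 12"
  "prog ! 95 = NStore 13 1"
  "prog ! 96 = NAdd 13 5 12"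
  "prog ! 97 = NLoad 10 13"
  "prog ! 98 = Jmp 92"
  "prog ! 99 = NAdd 8 0 15"
  "prog ! 100 = NConst 12 15"
  "prog ! 101 = NSub 12 8 12"
  "prog ! 102 = JmpZ 12 109"
  "prog ! 103 = NAdd 13 6 8"
  "prog ! 104 = NSub 13 13 1"
  "prog ! 105 = NLoad 12 13"
  "prog ! 106 = NStore 8 12"
  "prog ! 107 = NSub 8 8 1"
  "prog ! 108 = Jmp 100"
  "prog ! 109 = NAdd 0 6 15"
  "prog ! 110 = NConst 15 1"
  "prog ! 111 = NLoad 1 0"
  "prog ! 112 = NAdd 0 0 15"
  "prog ! 113 = NLoad 2 0"
  "prog ! 114 = NAdd 0 0 15"
  "prog ! 115 = NLoad 3 0"
  "prog ! 116 = NAdd 0 0 15"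
  "prog ! 117 = NLoad 4 0"
  "prog ! 118 = NAdd 0 0 15"
  "prog ! 119 = NLoad 5 0"
  "prog ! 120 = NAdd 0 0 15"
  "prog ! 121 = NLoad 6 0"
  "prog ! 122 = NAdd 0 0 15"
  "prog ! 123 = NLoad 7 0"
  "prog ! 124 = NAdd 0 0 15"
  "prog ! 125 = NLoad 8 0"
  "prog ! 126 = NAdd 0 0 15"
  "prog ! 127 = NLoad 9 0"
  "prog ! 128 = NAdd 0 0 15"
  "prog ! 129 = NLoad 10 0"
  "prog ! 130 = NAdd 0 0 15"
  "prog ! 131 = NLoad 11 0"
  "prog ! 132 = NAdd 0 0 15"
  "prog ! 133 = NLoad 12 0"
  "prog ! 134 = NAdd 0 0 15"
  "prog ! 135 = NLoad 13 0"
  "prog ! 136 = NAdd 0 0 15"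
  "prog ! 137 = NLoad 14 0"
  "prog ! 138 = NAdd 0 0 15"
  "prog ! 139 = NLoad 15 0"
  "prog ! 140 = Halt"
  by (simp_all add: prog_def)

definition reach :: "instr list \<Rightarrow> mstate \<Rightarrow> (mstate \<Rightarrow> bool) \<Rightarrow> nat \<Rightarrow> bool" where
  "reach P s Q b \<longleftrightarrow> (\<exists>t\<le>b. Q (run P t s))"

lemma Suc2: "Suc (Suc 0) = 2" by simp

lemma run_Suc: "run P (Suc t) s = run P t (step P s)"
  unfolding run_def funpow_Suc_right by simp

lemma run_add: "run P (t2 + t1) s = run P t2 (run P t1 s)"
  by (simp add: run_def funpow_add)

lemma reach_stop: "Q s \<Longrightarrow> reach P s Q b"
  unfolding reach_def by (rule exI[of _ 0]) (simp add: run_def)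

lemma reach_mono: "reach P s Q b \<Longrightarrow> b \<le> b' \<Longrightarrow> (\<And>s. Q s \<Longrightarrow> Q' s) \<Longrightarrow> reach P s Q' b'"
  unfolding reach_def by (meson order_trans)

lemma reach_trans: "reach P s Q1 b1 \<Longrightarrow> (\<And>s'. Q1 s' \<Longrightarrow> reach P s' Q2 b2) \<Longrightarrow> reach P s Q2 (b1 + b2)"
  unfolding reach_def
  by (metis add_le_mono run_add add.commute)

lemma reach_exec:
  assumes "pc s < length P" "P ! pc s \<noteq> Halt" "0 < b" "reach P (exec (P ! pc s) s) Q (b - 1)"
  shows "reach P s Q b"
proof -
  from assms(4) obtain t where t: "t \<le> b - 1" "Q (run P t (exec (P ! pc s) s))" unfolding reach_def by blast
  have "step P s = exec (P ! pc s) s" using assms(1,2) by (simp add: step_def halted_def)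
  then have "run P (Suc t) s = run P t (exec (P ! pc s) s)" by (simp add: run_Suc)
  then show ?thesis unfolding reach_def using t assms(3) by (intro exI[of _ "Suc t"]) auto
qed

lemma reach_loop:
  assumes step: "\<And>s m. I s m \<Longrightarrow> reach P s Q d \<or> (0 < m \<and> reach P s (\<lambda>s'. I s' (m - 1)) c)"
  shows "I s m \<Longrightarrow> reach P s Q (m * c + d)"
proof (induction m arbitrary: s)
  case 0
  then show ?case using step[OF 0] by simp
next
  case (Suc m)
  from step[OF Suc.prems] show ?case
  proof
    assume "reach P s Q d" then show ?thesis by (rule reach_mono) auto
  next
    assume "0 < Suc m \<and> reach P s (\<lambda>s'. I s' (Suc m - 1)) c"
    then have "reach P s (\<lambda>s'. I s' m) c" by simp
    then have "reach P s Q (c + (m * c + d))" by (rule reach_trans) (rule Suc.IH)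
    then show ?thesis by (simp add: add.assoc)
  qed
qed



definition orig :: "job list \<Rightarrow> nat \<Rightarrow> real" where
  "orig js x = job_field (x mod 5) (js ! (x div 5))"

definition regs :: "nat \<Rightarrow> mstate \<Rightarrow> bool" where
  "regs n s \<longleftrightarrow> nreg s 0 = n \<and> nreg s 1 = 1 \<and> nreg s 2 = 5 \<and> nreg s 3 = 5*n+20 \<and>
     nreg s 4 = n+20 \<and> nreg s 5 = 2*n+20 \<and> nreg s 6 = 3*n+20 \<and> nreg s 15 = 0"

definition ICopy :: "job list \<Rightarrow> mstate \<Rightarrow> nat \<Rightarrow> bool" where
  "ICopy js s m \<longleftrightarrow> (\<exists>i. m = 5 * length js - i \<and> i \<le> 5 * length js \<and> pc s = 17 \<and> regs (length js) s \<and>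
     nreg s 8 = i \<and> nreg s 9 = 5 * length js + 20 + i \<and> nreg s 12 = 5 * length js - i \<and>
     (\<forall>x<i. rreg s (5 * length js + 20 + x) = orig js x) \<and>
     (\<forall>x. i \<le> x \<and> x < 5 * length js \<longrightarrow> rreg s x = orig js x) \<and>
     (\<forall>x\<ge>16. nreg s x = 0))"

lemmas symb = prog_nth prog_length Suc2

lemma init_blk:
  assumes "pc s = 0" "nreg s 0 = length js" "\<forall>x\<ge>1. nreg s x = 0"
    "\<forall>x<5 * length js. rreg s x = orig js x"
  shows "reach prog s (\<lambda>s'. ICopy js s' (5 * length js)) 17"
proof -
  have "reach prog s (\<lambda>s'. ICopy js s' (5 * length js)) 17"
    using assms(1,2)
    apply -
    apply (rule reach_exec, simp add: symb, simp add: symb, simp, simp add: symb)+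
    apply (rule reach_stop)
    using assms(3,4)
    apply (simp add: ICopy_def regs_def)
    done
  then show ?thesis .
qed


abbreviation ov :: "job list \<Rightarrow> mstate \<Rightarrow> nat \<Rightarrow> real" where
  "ov js s j \<equiv> rreg s (5 * length js + 20 + 5 * j + 4)"

abbreviation pv :: "job list \<Rightarrow> mstate \<Rightarrow> nat \<Rightarrow> nat" where
  "pv js s j \<equiv> nreg s (2 * length js + 20 + j)"

definition DPm :: "job list \<Rightarrow> mstate \<Rightarrow> nat set \<Rightarrow> bool" where
  "DPm js s P \<longleftrightarrow>
   (\<forall>j<length js. \<forall>f<4. rreg s (5 * length js + 20 + 5 * j + f) = job_field f (js!j)) \<and>
   (\<forall>j<length js. j \<notin> P \<longrightarrow> ov js s j = wt (js!j)) \<and>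
   (\<forall>j\<in>P. isbest js j (ov js s j)) \<and>
   (\<forall>j\<in>P. (pv js s j = 0 \<and> ov js s j = wt (js!j)) \<or>
            (pv js s j \<noteq> 0 \<and> pv js s j - 1 \<in> P \<and> rel js (pv js s j - 1) j \<and>
             ov js s j = wt (js!j) + ov js s (pv js s j - 1))) \<and>
   (\<forall>j\<in>P. \<forall>i<length js. i \<notin> P \<longrightarrow> ra (js!j) \<le> ra (js!i)) \<and>
   (\<forall>j<length js. nreg s (3 * length js + 20 + j) = 0) \<and>
   P \<subseteq> {0..<length js}"

definition PROCm :: "job list \<Rightarrow> mstate \<Rightarrow> nat set \<Rightarrow> bool" where
  "PROCm js s Q \<longleftrightarrow> (\<forall>j<length js. nreg s (length js + 20 + j) = (if j \<in> Q then 1 else 0))"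

definition GST :: "job list \<Rightarrow> mstate \<Rightarrow> nat set \<Rightarrow> bool" where
  "GST js s P \<longleftrightarrow> 0 \<le> rreg s 4 \<and>
     ((nreg s 14 = 0 \<and> rreg s 4 = 0) \<or> (nreg s 14 \<noteq> 0 \<and> nreg s 14 - 1 \<in> P \<and> rreg s 4 = ov js s (nreg s 14 - 1))) \<and>
     (\<forall>j\<in>P. ov js s j \<le> rreg s 4)"

definition IOut :: "job list \<Rightarrow> mstate \<Rightarrow> nat \<Rightarrow> bool" where
  "IOut js s m \<longleftrightarrow> (\<exists>P. pc s = 28 \<and> regs (length js) s \<and> rreg s 5 = 0 \<and> nreg s 7 = m \<and>
     card P + m = length js \<and> DPm js s P \<and> PROCm js s P \<and> GST js s P)"

lemma DPm_frame:
  assumes "DPm js s P" "\<forall>x\<ge>16. nreg s' x = nreg s x" "\<forall>x\<ge>20. rreg s' x = rreg s x"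
  shows "DPm js s' P"
proof -
  have n: "\<And>x. 16 \<le> x \<Longrightarrow> nreg s' x = nreg s x" and r: "\<And>x. 20 \<le> x \<Longrightarrow> rreg s' x = rreg s x"
    using assms(2,3) by auto
  show ?thesis using assms(1) unfolding DPm_def by (simp add: n r)
qed

lemma PROCm_frame:
  assumes "PROCm js s P" "\<forall>x\<ge>16. nreg s' x = nreg s x"
  shows "PROCm js s' P"
  using assms unfolding PROCm_def by simp

lemma GST_frame:
  assumes "GST js s P" "\<forall>x\<ge>20. rreg s' x = rreg s x" "nreg s' 14 = nreg s 14" "rreg s' 4 = rreg s 4"
  shows "GST js s' P"
proof -
  have r: "\<And>x. 20 \<le> x \<Longrightarrow> rreg s' x = rreg s x" using assms(2) by auto
  show ?thesis using assms(1,3,4) unfolding GST_def by (simp add: r)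
qed

lemma orig_fld: "f < 5 \<Longrightarrow> orig js (5 * j + f) = job_field f (js ! j)"
  unfolding orig_def by simp

lemma copied:
  assumes "\<forall>x<5*n. rreg s (5*n+20+x) = orig js x" "j < n" "f < 5"
  shows "rreg s (5*n+20+5*j+f) = job_field f (js!j)"
proof -
  have "5*j+f < 5*n" using assms(2,3) by linarith
  then have "rreg s (5*n+20+(5*j+f)) = orig js (5*j+f)" using assms(1) by blast
  then show ?thesis using orig_fld[OF assms(3)] by (simp add: add.assoc)
qed

lemma copy_step:
  assumes "ICopy js s m"
  shows "reach prog s (\<lambda>s'. IOut js s' (length js)) 5 \<or> (0 < m \<and> reach prog s (\<lambda>s'. ICopy js s' (m - 1)) 7)"
proof -
  define n where "n = length js"
  obtain i where I: "m = 5 * n - i" "i \<le> 5 * n" "pc s = 17" "regs n s"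
     "nreg s 8 = i" "nreg s 9 = 5 * n + 20 + i" "nreg s 12 = 5 * n - i"
     "\<forall>x<i. rreg s (5 * n + 20 + x) = orig js x"
     "\<forall>x. i \<le> x \<and> x < 5 * n \<longrightarrow> rreg s x = orig js x"
     "\<forall>x\<ge>16. nreg s x = 0"
    using assms unfolding ICopy_def n_def by blast
  show ?thesis
  proof (cases "i = 5 * n")
    case True
    have "reach prog s (\<lambda>s'. IOut js s' (length js)) 5"
      using I(3,7) True
      apply -
      apply (rule reach_exec, simp add: symb, simp add: symb, simp, simp add: symb)+
      apply (rule reach_stop)
      unfolding IOut_def
      apply (rule exI[of _ "{}"])
      using I(4,8,10) True
      apply (simp add: regs_def DPm_def PROCm_def GST_def n_def[symmetric])
      apply (intro conjI allI impI)
      using copied[of n s js] apply simp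
      subgoal for j
        using copied[of n s js j 4] by (simp add: job_field_def)
      done
    then show ?thesis by blast
  next
    case False
    have "reach prog s (\<lambda>s'. ICopy js s' (m - 1)) 7"
      using I(3,5,6,7) False I(2) I(4)
      apply -
      apply (simp add: regs_def)
      apply (rule reach_exec, simp add: symb, simp add: symb, simp, simp add: symb)+
      apply (rule reach_stop)
      unfolding ICopy_def
      apply (rule exI[of _ "Suc i"])
      using I(1,8,9,10) I(4)
      apply (simp add: regs_def n_def[symmetric])
      done
    then show ?thesis using False I(1,2) by auto
  qed
qed


definition SelSt :: "job list \<Rightarrow> nat set \<Rightarrow> nat \<Rightarrow> mstate \<Rightarrow> nat \<Rightarrow> nat \<Rightarrow> bool" where
  "SelSt js P T s j cpc \<longleftrightarrow> pc s = cpc \<and> j \<le> length js \<and> regs (length js) s \<and> rreg s 5 = 0 \<and>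
     nreg s 7 = T \<and> card P + T = length js \<and> 0 < T \<and> DPm js s P \<and> PROCm js s P \<and> GST js s P \<and>
     nreg s 8 = j \<and> nreg s 9 = 5 * length js + 20 + 5 * j \<and>
     (nreg s 10 = 0 \<longrightarrow> (\<forall>i<j. i \<in> P)) \<and>
     (nreg s 10 \<noteq> 0 \<longrightarrow> nreg s 10 - 1 < j \<and> nreg s 10 - 1 \<notin> P \<and>
        nreg s 11 = 5 * length js + 20 + 5 * (nreg s 10 - 1) \<and> rreg s 2 = ra (js ! (nreg s 10 - 1)) \<and>
        (\<forall>i<j. i \<notin> P \<longrightarrow> ra (js ! (nreg s 10 - 1)) \<le> ra (js ! i)))"

definition ISel :: "job list \<Rightarrow> nat set \<Rightarrow> nat \<Rightarrow> mstate \<Rightarrow> nat \<Rightarrow> bool" where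
  "ISel js P T s m \<longleftrightarrow> (\<exists>j. m = length js - j \<and> SelSt js P T s j 32)"

definition FR :: "mstate \<Rightarrow> mstate \<Rightarrow> nat set \<Rightarrow> nat set \<Rightarrow> bool" where
  "FR s s' NS RS \<longleftrightarrow> (\<forall>x. x \<notin> NS \<longrightarrow> nreg s' x = nreg s x) \<and> (\<forall>x. x \<notin> RS \<longrightarrow> rreg s' x = rreg s x)"

lemma FR_n16: "FR s s' NS RS \<Longrightarrow> \<forall>x\<in>NS. x < 16 \<Longrightarrow> \<forall>x\<ge>16. nreg s' x = nreg s x"
proof (intro allI impI)
  fix x :: nat assume a: "FR s s' NS RS" "\<forall>x\<in>NS. x < 16" "16 \<le> x"
  then have "x \<notin> NS" by auto
  then show "nreg s' x = nreg s x" using a(1) unfolding FR_def by blast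
qed

lemma FR_r20: "FR s s' NS RS \<Longrightarrow> \<forall>x\<in>RS. x < 20 \<Longrightarrow> \<forall>x\<ge>20. rreg s' x = rreg s x"
proof (intro allI impI)
  fix x :: nat assume a: "FR s s' NS RS" "\<forall>x\<in>RS. x < 20" "20 \<le> x"
  then have "x \<notin> RS" by auto
  then show "rreg s' x = rreg s x" using a(1) unfolding FR_def by blast
qed

lemma FR_DPm: "FR s s' NS RS \<Longrightarrow> \<forall>x\<in>NS. x < 16 \<Longrightarrow> \<forall>x\<in>RS. x < 20 \<Longrightarrow> DPm js s P \<Longrightarrow> DPm js s' P"
proof -
  assume a: "FR s s' NS RS" "\<forall>x\<in>NS. x < 16" "\<forall>x\<in>RS. x < 20" "DPm js s P"
  show ?thesis using DPm_frame[OF a(4) FR_n16[OF a(1,2)] FR_r20[OF a(1,3)]] .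
qed

lemma FR_PROCm: "FR s s' NS RS \<Longrightarrow> \<forall>x\<in>NS. x < 16 \<Longrightarrow> PROCm js s P \<Longrightarrow> PROCm js s' P"
proof -
  assume a: "FR s s' NS RS" "\<forall>x\<in>NS. x < 16" "PROCm js s P"
  show ?thesis using PROCm_frame[OF a(3) FR_n16[OF a(1,2)]] .
qed

lemma FR_GST: "FR s s' NS RS \<Longrightarrow> \<forall>x\<in>NS. x < 16 \<and> x \<noteq> 14 \<Longrightarrow> \<forall>x\<in>RS. x < 20 \<and> x \<noteq> 4 \<Longrightarrow> GST js s P \<Longrightarrow> GST js s' P"
proof -
  assume a: "FR s s' NS RS" "\<forall>x\<in>NS. x < 16 \<and> x \<noteq> 14" "\<forall>x\<in>RS. x < 20 \<and> x \<noteq> 4" "GST js s P"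
  have "\<forall>x\<in>RS. x < 20" using a(3) by blast
  then have r: "\<forall>x\<ge>20. rreg s' x = rreg s x" using FR_r20 a(1) by blast
  have "nreg s' 14 = nreg s 14" "rreg s' 4 = rreg s 4" using a(1,2,3) unfolding FR_def by blast+
  then show ?thesis using GST_frame a(4) r by blast
qed

lemma FR_regs: "FR s s' NS RS \<Longrightarrow> \<forall>x\<in>NS. x \<notin> {0,1,2,3,4,5,6,15} \<Longrightarrow> regs n s \<Longrightarrow> regs n s'"
proof -
  assume a: "FR s s' NS RS" "\<forall>x\<in>NS. x \<notin> {0,1,2,3,4,5,6,15}" "regs n s"
  have "\<And>x. x \<in> {0,1,2,3,4,5,6,15} \<Longrightarrow> nreg s' x = nreg s x" using a(1,2) unfolding FR_def by blast
  then show ?thesis using a(3) unfolding regs_def by simp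
qed

lemma DPm_fld: "DPm js s P \<Longrightarrow> j < length js \<Longrightarrow> f < 4 \<Longrightarrow> rreg s (5 * length js + 20 + 5 * j + f) = job_field f (js!j)"
  unfolding DPm_def by blast


lemma sel_post_inv:
  assumes S: "SelSt js P T s j 32" and j: "j < length js"
    and F: "FR s s' {8,9,10,11,12} {0,2}"
    and p: "pc s' = 32" "nreg s' 8 = Suc j" "nreg s' 9 = 5 * length js + 20 + 5 * j + 5"
    and tk: "(nreg s (length js + 20 + j) = 0 \<and> (nreg s 10 = 0 \<or> \<not> rreg s 2 \<le> ra (js!j))) \<longrightarrow>
              nreg s' 10 = Suc j \<and> nreg s' 11 = 5 * length js + 20 + 5 * j \<and> rreg s' 2 = ra (js!j)"
    and ntk: "\<not>(nreg s (length js + 20 + j) = 0 \<and> (nreg s 10 = 0 \<or> \<not> rreg s 2 \<le> ra (js!j))) \<longrightarrow>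
              nreg s' 10 = nreg s 10 \<and> nreg s' 11 = nreg s 11 \<and> rreg s' 2 = rreg s 2"
  shows "SelSt js P T s' (Suc j) 32"
proof -
  have F1: "\<forall>x\<in>{8,9,10,11,12::nat}. x < 16" "\<forall>x\<in>{0,2::nat}. x < 20" "\<forall>x\<in>{8,9,10,11,12::nat}. x < 16 \<and> x \<noteq> 14" "\<forall>x\<in>{0,2::nat}. x < 20 \<and> x \<noteq> 4"
    "\<forall>x\<in>{8,9,10,11,12::nat}. x \<notin> {0,1,2,3,4,5,6,15}" by auto
  have S0: "rreg s 5 = 0" "nreg s 7 = T" "card P + T = length js" "0 < T" "DPm js s P" "PROCm js s P" "GST js s P" "regs (length js) s"
    using S unfolding SelSt_def by blast+
  have D: "DPm js s' P" "PROCm js s' P" "GST js s' P" "regs (length js) s'"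
    using FR_DPm[OF F F1(1,2) S0(5)] FR_PROCm[OF F F1(1) S0(6)] FR_GST[OF F F1(3,4) S0(7)] FR_regs[OF F F1(5) S0(8)]
    by blast+
  have o: "rreg s' 5 = rreg s 5" "nreg s' 7 = nreg s 7" using F unfolding FR_def by auto
  have pr: "nreg s (length js + 20 + j) = (if j \<in> P then 1 else 0)"
    using S0(6) j unfolding PROCm_def by blast
  have cand: "(nreg s 10 = 0 \<longrightarrow> (\<forall>i<j. i \<in> P)) \<and>
     (nreg s 10 \<noteq> 0 \<longrightarrow> nreg s 10 - 1 < j \<and> nreg s 10 - 1 \<notin> P \<and>
        nreg s 11 = 5 * length js + 20 + 5 * (nreg s 10 - 1) \<and> rreg s 2 = ra (js ! (nreg s 10 - 1)) \<and>
        (\<forall>i<j. i \<notin> P \<longrightarrow> ra (js ! (nreg s 10 - 1)) \<le> ra (js ! i)))"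
    using S unfolding SelSt_def by blast
  have cand': "(nreg s' 10 = 0 \<longrightarrow> (\<forall>i<Suc j. i \<in> P)) \<and>
     (nreg s' 10 \<noteq> 0 \<longrightarrow> nreg s' 10 - 1 < Suc j \<and> nreg s' 10 - 1 \<notin> P \<and>
        nreg s' 11 = 5 * length js + 20 + 5 * (nreg s' 10 - 1) \<and> rreg s' 2 = ra (js ! (nreg s' 10 - 1)) \<and>
        (\<forall>i<Suc j. i \<notin> P \<longrightarrow> ra (js ! (nreg s' 10 - 1)) \<le> ra (js ! i)))"
  proof (cases "nreg s (length js + 20 + j) = 0 \<and> (nreg s 10 = 0 \<or> \<not> rreg s 2 \<le> ra (js!j))")
    case True
    then have jP: "j \<notin> P" using pr by (auto split: if_splits)
    have "\<forall>i<Suc j. i \<notin> P \<longrightarrow> ra (js ! j) \<le> ra (js ! i)"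
    proof (intro allI impI)
      fix i assume i: "i < Suc j" "i \<notin> P"
      show "ra (js ! j) \<le> ra (js ! i)"
      proof (cases "i = j")
        case False
        then have ij: "i < j" using i by simp
        then have c: "nreg s 10 \<noteq> 0" using cand i(2) by blast
        then have "\<not> rreg s 2 \<le> ra (js!j)" using True by simp
        moreover have "rreg s 2 \<le> ra (js ! i)" using cand c ij i(2) by auto
        ultimately show ?thesis by linarith
      qed simp
    qed
    then show ?thesis using tk True jP by simp
  next
    case False
    then have nt: "nreg s' 10 = nreg s 10" "nreg s' 11 = nreg s 11" "rreg s' 2 = rreg s 2" using ntk by blast+
    show ?thesis
    proof (cases "nreg s 10 = 0")
      case True
      then have "j \<in> P" using False pr by (auto split: if_splits)
      then have "\<forall>i<Suc j. i \<in> P" using cand True less_Suc_eq by auto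
      then show ?thesis using nt True by simp
    next
      case c: False
      then have jj: "j \<in> P \<or> rreg s 2 \<le> ra (js!j)" using False pr by (auto split: if_splits)
      have "\<forall>i<Suc j. i \<notin> P \<longrightarrow> ra (js ! (nreg s 10 - 1)) \<le> ra (js ! i)"
      proof (intro allI impI)
        fix i assume i: "i < Suc j" "i \<notin> P"
        show "ra (js ! (nreg s 10 - 1)) \<le> ra (js ! i)"
        proof (cases "i = j")
          case True then show ?thesis using jj i cand c by auto
        next
          case False then show ?thesis using i cand c by auto
        qed
      qed
      then show ?thesis using nt c cand by auto
    qed
  qed
  show ?thesis unfolding SelSt_def
    using p D o S0 j cand' by simp
qed


lemma SelSt_frame:
  assumes "SelSt js P T s j c" "FR s s' {12} {}" "pc s' = c'"
  shows "SelSt js P T s' j c'"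
proof -
  have F1: "\<forall>x\<in>{12::nat}. x < 16" "\<forall>x\<in>{}::nat set. x < 20" "\<forall>x\<in>{12::nat}. x < 16 \<and> x \<noteq> 14" "\<forall>x\<in>{}::nat set. x < 20 \<and> x \<noteq> 4"
    "\<forall>x\<in>{12::nat}. x \<notin> {0,1,2,3,4,5,6,15}" by auto
  have S0: "DPm js s P" "PROCm js s P" "GST js s P" "regs (length js) s"
    using assms(1) unfolding SelSt_def by blast+
  have D: "DPm js s' P" "PROCm js s' P" "GST js s' P" "regs (length js) s'"
    using FR_DPm[OF assms(2) F1(1,2) S0(1)] FR_PROCm[OF assms(2) F1(1) S0(2)] FR_GST[OF assms(2) F1(3,4) S0(3)] FR_regs[OF assms(2) F1(5) S0(4)]
    by blast+
  have o: "\<And>x. x \<noteq> 12 \<Longrightarrow> nreg s' x = nreg s x" "\<And>x. rreg s' x = rreg s x" using assms(2) unfolding FR_def by auto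
  show ?thesis using assms(1,3) D unfolding SelSt_def by (simp add: o)
qed

lemma sel_step:
  assumes "ISel js P T s m"
  shows "reach prog s (\<lambda>s'. SelSt js P T s' (length js) 48) 2 \<or> (0 < m \<and> reach prog s (\<lambda>s'. ISel js P T s' (m - 1)) 15)"
proof -
  obtain j where j: "m = length js - j" and S: "SelSt js P T s j 32" using assms unfolding ISel_def by blast
  have R: "regs (length js) s" "pc s = 32" "nreg s 8 = j" "nreg s 9 = 5 * length js + 20 + 5 * j" "rreg s 5 = 0" "j \<le> length js"
    using S unfolding SelSt_def by blast+
  show ?thesis
  proof (cases "j = length js")
    case True
    have "reach prog s (\<lambda>s'. pc s' = 48 \<and> FR s s' {12} {}) 2"
      using R True unfolding regs_def
      apply -
      apply (rule reach_exec, simp add: symb, simp add: symb, simp, simp add: symb)+ apply (rule reach_stop)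
      apply (simp add: FR_def)
      done
    then have "reach prog s (\<lambda>s'. SelSt js P T s' (length js) 48) 2"
      by (rule reach_mono) (use SelSt_frame S True in auto)
    then show ?thesis by blast
  next
    case False
    then have jl: "j < length js" using R by simp
    define POST where "POST = (\<lambda>s'. pc s' = 32 \<and> nreg s' 8 = Suc j \<and> nreg s' 9 = 5 * length js + 20 + 5 * j + 5 \<and>
      FR s s' {8,9,10,11,12} {0,2} \<and>
      ((nreg s (length js + 20 + j) = 0 \<and> (nreg s 10 = 0 \<or> \<not> rreg s 2 \<le> ra (js!j))) \<longrightarrow>
              nreg s' 10 = Suc j \<and> nreg s' 11 = 5 * length js + 20 + 5 * j \<and> rreg s' 2 = ra (js!j)) \<and>
      (\<not>(nreg s (length js + 20 + j) = 0 \<and> (nreg s 10 = 0 \<or> \<not> rreg s 2 \<le> ra (js!j))) \<longrightarrow>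
              nreg s' 10 = nreg s 10 \<and> nreg s' 11 = nreg s 11 \<and> rreg s' 2 = rreg s 2))"
    have aj: "rreg s (5 * length js + 20 + 5 * j + 1) = ra (js!j)"
      using DPm_fld[of js s P j 1] S jl unfolding SelSt_def by (simp add: job_field_def)
    have "reach prog s POST 15"
    proof (cases "nreg s (length js + 20 + j) = 0")
      case False
      have "reach prog s POST 9"
        using R jl False unfolding regs_def POST_def
        apply -
        apply (rule reach_exec, simp add: symb, simp add: symb, simp, simp add: symb)+ apply (rule reach_stop)
        apply (simp add: FR_def)
        done
      then show ?thesis by (rule reach_mono) auto
    next
      case p0: True
      show ?thesis
      proof (cases "nreg s 10 = 0")
        case True
        have "reach prog s POST 14"
          using R jl p0 True aj unfolding regs_def POST_def
          apply -
          apply (rule reach_exec, simp add: symb, simp add: symb, simp, simp add: symb)+ apply (rule reach_stop)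
          apply (simp add: FR_def)
          done
        then show ?thesis by (rule reach_mono) auto
      next
        case c: False
        show ?thesis
        proof (cases "rreg s 2 \<le> ra (js!j)")
          case True
          have "reach prog s POST 12"
            using R jl p0 c True aj unfolding regs_def POST_def
            apply -
            apply (rule reach_exec, simp add: symb, simp add: symb, simp, simp add: symb)+ apply (rule reach_stop)
            apply (simp add: FR_def)
            done
          then show ?thesis by (rule reach_mono) auto
        next
          case False
          have "reach prog s POST 15"
            using R jl p0 c False aj unfolding regs_def POST_def
            apply -
            apply (rule reach_exec, simp add: symb, simp add: symb, simp, simp add: symb)+ apply (rule reach_stop)
            apply (simp add: FR_def)
            done
          then show ?thesis .
        qed
      qed
    qed
    then have "reach prog s (\<lambda>s'. ISel js P T s' (m - 1)) 15"
    proof (rule reach_mono)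
      fix s' assume "POST s'"
      then have "SelSt js P T s' (Suc j) 32"
        unfolding POST_def by (intro sel_post_inv[OF S jl]) auto
      then show "ISel js P T s' (m - 1)" unfolding ISel_def using j by (intro exI[of _ "Suc j"]) auto
    qed simp
    then show ?thesis using j jl by auto
  qed
qed


definition OsSt :: "job list \<Rightarrow> nat set \<Rightarrow> nat \<Rightarrow> nat \<Rightarrow> mstate \<Rightarrow> nat \<Rightarrow> nat \<Rightarrow> bool" where
  "OsSt js P T k s j cpc \<longleftrightarrow> pc s = cpc \<and> j \<le> length js \<and> regs (length js) s \<and> rreg s 5 = 0 \<and>
     nreg s 7 = T \<and> card P + T = length js \<and> 0 < T \<and> DPm js s P \<and> PROCm js s (insert k P) \<and> GST js s P \<and>
     nreg s 10 = k \<and> nreg s 11 = 5 * length js + 20 + 5 * k \<and> rreg s 6 = ra (js!k) \<and> rreg s 7 = lft (js!k) \<and>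
     nreg s 8 = j \<and> nreg s 9 = 5 * length js + 20 + 5 * j \<and> 0 \<le> rreg s 3 \<and>
     ((nreg s 13 = 0 \<and> rreg s 3 = 0) \<or>
      (nreg s 13 \<noteq> 0 \<and> nreg s 13 - 1 < length js \<and> rel js (nreg s 13 - 1) k \<and> rreg s 3 = ov js s (nreg s 13 - 1))) \<and>
     (\<forall>i<j. rel js i k \<longrightarrow> ov js s i \<le> rreg s 3)"

definition Kok :: "job list \<Rightarrow> nat set \<Rightarrow> nat \<Rightarrow> bool" where
  "Kok js P k \<longleftrightarrow> k < length js \<and> k \<notin> P \<and> (\<forall>i<length js. i \<notin> P \<longrightarrow> ra (js!k) \<le> ra (js!i))"

definition IOs :: "job list \<Rightarrow> nat set \<Rightarrow> nat \<Rightarrow> nat \<Rightarrow> mstate \<Rightarrow> nat \<Rightarrow> bool" where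
  "IOs js P T k s m \<longleftrightarrow> (\<exists>j. m = length js - j \<and> OsSt js P T k s j 58)"

lemma DPm_cong:
  assumes "DPm js s P"
    "\<forall>j<length js. \<forall>f<5. rreg s' (5 * length js + 20 + 5 * j + f) = rreg s (5 * length js + 20 + 5 * j + f)"
    "\<forall>j<length js. pv js s' j = pv js s j"
    "\<forall>j<length js. nreg s' (3 * length js + 20 + j) = nreg s (3 * length js + 20 + j)"
  shows "DPm js s' P"
proof -
  have P: "P \<subseteq> {0..<length js}" using assms(1) unfolding DPm_def by blast
  have o: "\<And>j. j < length js \<Longrightarrow> ov js s' j = ov js s j"
  proof -
    fix j assume "j < length js"
    moreover have "(4::nat) < 5" by simp
    ultimately show "ov js s' j = ov js s j" using assms(2) by blast
  qed
  have f: "\<And>j f. j < length js \<Longrightarrow> f < 4 \<Longrightarrow> rreg s' (5 * length js + 20 + 5 * j + f) = rreg s (5 * length js + 20 + 5 * j + f)"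
    using assms(2) by simp
  have p: "\<And>j. j < length js \<Longrightarrow> pv js s' j = pv js s j" using assms(3) by simp
  have fl: "\<And>j. j < length js \<Longrightarrow> nreg s' (3 * length js + 20 + j) = nreg s (3 * length js + 20 + j)" using assms(4) by simp
  have PP: "\<And>j. j \<in> P \<Longrightarrow> j < length js" using P by auto
  have o2: "\<And>j. j \<in> P \<Longrightarrow> ov js s' j = ov js s j" using o PP by blast
  have p2: "\<And>j. j \<in> P \<Longrightarrow> pv js s' j = pv js s j" using p PP by blast
  have p3: "\<And>j. j \<in> P \<Longrightarrow> pv js s j \<noteq> 0 \<Longrightarrow> pv js s j - 1 \<in> P \<Longrightarrow> ov js s' (pv js s j - 1) = ov js s (pv js s j - 1)"
    using o2 by blast
  show ?thesis using assms(1) unfolding DPm_def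
    apply (elim conjE)
    apply (intro conjI)
    using f apply simp
    using o apply simp
    using o2 apply simp
    using o2 p2 p3 apply (smt (verit))
    apply simp
    using fl apply simp
    apply simp
    done
qed

lemma PROCm_store:
  assumes "PROCm js s P" "k < length js" "\<forall>j<length js. j \<noteq> k \<longrightarrow> nreg s' (length js + 20 + j) = nreg s (length js + 20 + j)"
    "nreg s' (length js + 20 + k) = 1"
  shows "PROCm js s' (insert k P)"
  using assms unfolding PROCm_def by auto

lemma send_blk:
  assumes S: "SelSt js P T s (length js) 48"
  shows "reach prog s (\<lambda>s'. \<exists>k. Kok js P k \<and> IOs js P T k s' (length js)) 10"
proof -
  have R: "regs (length js) s" "pc s = 48" "card P + T = length js" "0 < T" "DPm js s P" "PROCm js s P" "GST js s P"
    "rreg s 5 = 0" "nreg s 7 = T"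
    using S unfolding SelSt_def by blast+
  have cand: "(nreg s 10 = 0 \<longrightarrow> (\<forall>i<length js. i \<in> P)) \<and>
     (nreg s 10 \<noteq> 0 \<longrightarrow> nreg s 10 - 1 < length js \<and> nreg s 10 - 1 \<notin> P \<and>
        nreg s 11 = 5 * length js + 20 + 5 * (nreg s 10 - 1) \<and> rreg s 2 = ra (js ! (nreg s 10 - 1)) \<and>
        (\<forall>i<length js. i \<notin> P \<longrightarrow> ra (js ! (nreg s 10 - 1)) \<le> ra (js ! i)))"
    using S unfolding SelSt_def by blast
  have Psub: "P \<subseteq> {0..<length js}" using R(5) unfolding DPm_def by blast
  have "nreg s 10 \<noteq> 0"
  proof
    assume "nreg s 10 = 0"
    then have "{0..<length js} \<subseteq> P" using cand by auto
    then have "P = {0..<length js}" using Psub by blast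
    then show False using R(3,4) by simp
  qed
  then obtain k where k: "nreg s 10 = Suc k" using not0_implies_Suc by blast
  have K: "Kok js P k" "nreg s 11 = 5 * length js + 20 + 5 * k" using cand k unfolding Kok_def by auto
  have kl: "k < length js" using K unfolding Kok_def by blast
  have ak: "rreg s (5 * length js + 20 + 5 * k + 1) = ra (js!k)"
    using DPm_fld[OF R(5) kl, of 1] by (simp add: job_field_def)
  have lk: "rreg s (5 * length js + 20 + 5 * k) = lft (js!k)"
    using DPm_fld[OF R(5) kl, of 0] by (simp add: job_field_def)
  define POST where "POST = (\<lambda>s'. pc s' = 58 \<and> FR s s' {8,9,10,12,13, length js + 20 + k} {3,6,7} \<and>
     nreg s' (length js + 20 + k) = 1 \<and> nreg s' 10 = k \<and> nreg s' 8 = 0 \<and> nreg s' 9 = 5 * length js + 20 \<and>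
     nreg s' 13 = 0 \<and> rreg s' 3 = 0 \<and> rreg s' 6 = ra (js!k) \<and> rreg s' 7 = lft (js!k))"
  have "reach prog s POST 10"
    using R(1,2) k K(2) ak lk unfolding regs_def POST_def
    apply -
    apply (rule reach_exec, simp add: symb, simp add: symb, simp, simp add: symb)+ apply (rule reach_stop)
    apply (simp add: FR_def)
    done
  then show ?thesis
  proof (rule reach_mono)
    fix s' assume P': "POST s'"
    have F: "FR s s' {8,9,10,12,13, length js + 20 + k} {3,6,7}" using P' unfolding POST_def by blast
    have Fn: "\<And>x. x \<notin> {8,9,10,12,13, length js + 20 + k} \<Longrightarrow> nreg s' x = nreg s x"
      and Fr: "\<And>x. x \<notin> {3,6,7} \<Longrightarrow> rreg s' x = rreg s x" using F unfolding FR_def by auto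
    have D: "DPm js s' P"
      by (rule DPm_cong[OF R(5)]) (use Fn Fr kl in auto)
    have Pr: "PROCm js s' (insert k P)"
      by (rule PROCm_store[OF R(6) kl]) (use Fn P' in \<open>auto simp: POST_def\<close>)
    have G: "GST js s' P"
      unfolding GST_def using R(7) Fn Fr unfolding GST_def by simp
    have rg: "regs (length js) s'" using R(1) Fn kl unfolding regs_def by simp
    have "OsSt js P T k s' 0 58"
      unfolding OsSt_def using P' D Pr G rg R K Fn Fr unfolding POST_def by simp
    then show "\<exists>k. Kok js P k \<and> IOs js P T k s' (length js)"
      using K(1) unfolding IOs_def by (metis minus_nat.diff_0)
  qed simp
qed


lemma OsSt_frame:
  assumes "OsSt js P T k s j c" "FR s s' {12} {}" "pc s' = c'"
  shows "OsSt js P T k s' j c'"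
proof -
  have F1: "\<forall>x\<in>{12::nat}. x < 16" "\<forall>x\<in>{}::nat set. x < 20" "\<forall>x\<in>{12::nat}. x < 16 \<and> x \<noteq> 14" "\<forall>x\<in>{}::nat set. x < 20 \<and> x \<noteq> 4"
    "\<forall>x\<in>{12::nat}. x \<notin> {0,1,2,3,4,5,6,15}" by auto
  have S0: "DPm js s P" "PROCm js s (insert k P)" "GST js s P" "regs (length js) s"
    using assms(1) unfolding OsSt_def by blast+
  have D: "DPm js s' P" "PROCm js s' (insert k P)" "GST js s' P" "regs (length js) s'"
    using FR_DPm[OF assms(2) F1(1,2) S0(1)] FR_PROCm[OF assms(2) F1(1) S0(2)] FR_GST[OF assms(2) F1(3,4) S0(3)] FR_regs[OF assms(2) F1(5) S0(4)]
    by blast+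
  have o: "\<And>x. x \<noteq> 12 \<Longrightarrow> nreg s' x = nreg s x" "\<And>x. rreg s' x = rreg s x" using assms(2) unfolding FR_def by auto
  show ?thesis using assms(1,3) D unfolding OsSt_def by (simp add: o)
qed

lemma os_post_inv:
  assumes S: "OsSt js P T k s j 58" and j: "j < length js"
    and F: "FR s s' {8,9,12,13} {0,3}"
    and p: "pc s' = 58" "nreg s' 8 = Suc j" "nreg s' 9 = 5 * length js + 20 + 5 * j + 5"
    and up: "(rel js j k \<and> \<not> ov js s j \<le> rreg s 3) \<longrightarrow> nreg s' 13 = Suc j \<and> rreg s' 3 = ov js s j"
    and nup: "\<not>(rel js j k \<and> \<not> ov js s j \<le> rreg s 3) \<longrightarrow> nreg s' 13 = nreg s 13 \<and> rreg s' 3 = rreg s 3"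
  shows "OsSt js P T k s' (Suc j) 58"
proof -
  have F1: "\<forall>x\<in>{8,9,12,13::nat}. x < 16" "\<forall>x\<in>{0,3::nat}. x < 20" "\<forall>x\<in>{8,9,12,13::nat}. x < 16 \<and> x \<noteq> 14" "\<forall>x\<in>{0,3::nat}. x < 20 \<and> x \<noteq> 4"
    "\<forall>x\<in>{8,9,12,13::nat}. x \<notin> {0,1,2,3,4,5,6,15}" by auto
  have S0: "DPm js s P" "PROCm js s (insert k P)" "GST js s P" "regs (length js) s"
    using S unfolding OsSt_def by blast+
  have D: "DPm js s' P" "PROCm js s' (insert k P)" "GST js s' P" "regs (length js) s'"
    using FR_DPm[OF F F1(1,2) S0(1)] FR_PROCm[OF F F1(1) S0(2)] FR_GST[OF F F1(3,4) S0(3)] FR_regs[OF F F1(5) S0(4)]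
    by blast+
  have Fn: "\<And>x. x \<notin> {8,9,12,13} \<Longrightarrow> nreg s' x = nreg s x" and Fr: "\<And>x. x \<notin> {0,3} \<Longrightarrow> rreg s' x = rreg s x"
    using F unfolding FR_def by auto
  have ovs: "\<And>x. 20 \<le> x \<Longrightarrow> rreg s' x = rreg s x" using Fr by simp
  have M: "0 \<le> rreg s 3" "(nreg s 13 = 0 \<and> rreg s 3 = 0) \<or>
      (nreg s 13 \<noteq> 0 \<and> nreg s 13 - 1 < length js \<and> rel js (nreg s 13 - 1) k \<and> rreg s 3 = ov js s (nreg s 13 - 1))"
     "\<forall>i<j. rel js i k \<longrightarrow> ov js s i \<le> rreg s 3"
    using S unfolding OsSt_def by blast+
  have M': "0 \<le> rreg s' 3 \<and> ((nreg s' 13 = 0 \<and> rreg s' 3 = 0) \<or>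
      (nreg s' 13 \<noteq> 0 \<and> nreg s' 13 - 1 < length js \<and> rel js (nreg s' 13 - 1) k \<and> rreg s' 3 = ov js s' (nreg s' 13 - 1))) \<and>
     (\<forall>i<Suc j. rel js i k \<longrightarrow> ov js s' i \<le> rreg s' 3)"
  proof (cases "rel js j k \<and> \<not> ov js s j \<le> rreg s 3")
    case True
    then have u: "nreg s' 13 = Suc j" "rreg s' 3 = ov js s j" using up by blast+
    have "\<forall>i<Suc j. rel js i k \<longrightarrow> ov js s i \<le> ov js s j"
    proof (intro allI impI)
      fix i assume i: "i < Suc j" "rel js i k"
      show "ov js s i \<le> ov js s j"
      proof (cases "i = j")
        case False
        then have "ov js s i \<le> rreg s 3" using M(3) i by simp
        then show ?thesis using True by linarith
      qed simp
    qed
    then show ?thesis using u True M(1) j by (simp add: ovs)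
  next
    case False
    then have u: "nreg s' 13 = nreg s 13" "rreg s' 3 = rreg s 3" using nup by blast+
    have "\<forall>i<Suc j. rel js i k \<longrightarrow> ov js s i \<le> rreg s 3"
      using M(3) False less_Suc_eq by auto
    then show ?thesis using u M(1,2) by (simp add: ovs)
  qed
  have S1: "rreg s 5 = 0" "nreg s 7 = T" "card P + T = length js" "0 < T" "nreg s 10 = k" "nreg s 11 = 5 * length js + 20 + 5 * k"
     "rreg s 6 = ra (js!k)" "rreg s 7 = lft (js!k)"
    using S unfolding OsSt_def by blast+
  show ?thesis unfolding OsSt_def
    using p D M' S1 j Fn Fr by simp
qed

lemma os_step:
  assumes "IOs js P T k s m"
  shows "reach prog s (\<lambda>s'. OsSt js P T k s' (length js) 79) 2 \<or> (0 < m \<and> reach prog s (\<lambda>s'. IOs js P T k s' (m - 1)) 19)"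
proof -
  obtain j where j: "m = length js - j" and S: "OsSt js P T k s j 58" using assms unfolding IOs_def by blast
  have R: "regs (length js) s" "pc s = 58" "nreg s 8 = j" "nreg s 9 = 5 * length js + 20 + 5 * j" "rreg s 5 = 0" "j \<le> length js"
    "rreg s 6 = ra (js!k)" "rreg s 7 = lft (js!k)" "DPm js s P"
    using S unfolding OsSt_def by blast+
  show ?thesis
  proof (cases "j = length js")
    case True
    have "reach prog s (\<lambda>s'. pc s' = 79 \<and> FR s s' {12} {}) 2"
      using R True unfolding regs_def
      apply -
      apply (rule reach_exec, simp add: symb, simp add: symb, simp, simp add: symb)+ apply (rule reach_stop)
      apply (simp add: FR_def)
      done
    then have "reach prog s (\<lambda>s'. OsSt js P T k s' (length js) 79) 2"
      by (rule reach_mono) (use OsSt_frame S True in auto)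
    then show ?thesis by blast
  next
    case False
    then have jl: "j < length js" using R by simp
    define POST where "POST = (\<lambda>s'. pc s' = 58 \<and> nreg s' 8 = Suc j \<and> nreg s' 9 = 5 * length js + 20 + 5 * j + 5 \<and>
      FR s s' {8,9,12,13} {0,3} \<and>
      ((rel js j k \<and> \<not> ov js s j \<le> rreg s 3) \<longrightarrow> nreg s' 13 = Suc j \<and> rreg s' 3 = ov js s j) \<and>
      (\<not>(rel js j k \<and> \<not> ov js s j \<le> rreg s 3) \<longrightarrow> nreg s' 13 = nreg s 13 \<and> rreg s' 3 = rreg s 3))"
    have rj: "rreg s (5 * length js + 20 + 5 * j + 3) = rgt (js!j)"
      using DPm_fld[OF R(9) jl, of 3] by (simp add: job_field_def)
    have bj: "rreg s (5 * length js + 20 + 5 * j + 2) = rb (js!j)"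
      using DPm_fld[OF R(9) jl, of 2] by (simp add: job_field_def)
    have "reach prog s POST 19"
    proof (cases "rgt (js!j) \<le> ra (js!k)")
      case False
      have "reach prog s POST 10"
        using R jl False rj unfolding regs_def POST_def rel_def
        apply -
        apply (rule reach_exec, simp add: symb, simp add: symb, simp, simp add: symb)+ apply (rule reach_stop)
        apply (simp add: FR_def)
        done
      then show ?thesis by (rule reach_mono) auto
    next
      case c1: True
      show ?thesis
      proof (cases "rb (js!j) \<le> lft (js!k)")
        case False
        have "reach prog s POST 14"
          using R jl c1 False rj bj unfolding regs_def POST_def rel_def
          apply -
          apply (rule reach_exec, simp add: symb, simp add: symb, simp, simp add: symb)+ apply (rule reach_stop)
          apply (simp add: FR_def)
          done
        then show ?thesis by (rule reach_mono) auto
      next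
        case c2: True
        show ?thesis
        proof (cases "ov js s j \<le> rreg s 3")
          case True
          have "reach prog s POST 17"
            using R jl c1 c2 True rj bj unfolding regs_def POST_def rel_def
            apply -
            apply (rule reach_exec, simp add: symb, simp add: symb, simp, simp add: symb)+ apply (rule reach_stop)
            apply (simp add: FR_def)
            done
          then show ?thesis by (rule reach_mono) auto
        next
          case False
          have "reach prog s POST 19"
            using R jl c1 c2 False rj bj unfolding regs_def POST_def rel_def
            apply -
            apply (rule reach_exec, simp add: symb, simp add: symb, simp, simp add: symb)+ apply (rule reach_stop)
            apply (simp add: FR_def)
            done
          then show ?thesis .
        qed
      qed
    qed
    then have "reach prog s (\<lambda>s'. IOs js P T k s' (m - 1)) 19"
    proof (rule reach_mono)
      fix s' assume "POST s'"
      then have "OsSt js P T k s' (Suc j) 58"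
        unfolding POST_def by (intro os_post_inv[OF S jl]) auto
      then show "IOs js P T k s' (m - 1)" unfolding IOs_def using j by (intro exI[of _ "Suc j"]) auto
    qed simp
    then show ?thesis using j jl by auto
  qed
qed


lemma addr5: "f < 4 \<Longrightarrow> 5 * j + f \<noteq> 5 * k + (4::nat)"
  by presburger

lemma oend_inv:
  assumes av: "allvalid js" and S: "OsSt js P T k s (length js) 79" and K: "Kok js P k"
    and Fn: "\<And>x. x \<notin> {7, 12, 14, 2 * length js + 20 + k} \<Longrightarrow> nreg s' x = nreg s x"
    and Fr: "\<And>x. x \<notin> {0, 4, 5 * length js + 20 + 5 * k + 4} \<Longrightarrow> rreg s' x = rreg s x"
    and p: "pc s' = 28" "nreg s' 7 = T - 1" "ov js s' k = wt (js!k) + rreg s 3" "pv js s' k = nreg s 13"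
    and up: "\<not> wt (js!k) + rreg s 3 \<le> rreg s 4 \<longrightarrow> nreg s' 14 = Suc k \<and> rreg s' 4 = wt (js!k) + rreg s 3"
    and nup: "wt (js!k) + rreg s 3 \<le> rreg s 4 \<longrightarrow> nreg s' 14 = nreg s 14 \<and> rreg s' 4 = rreg s 4"
  shows "IOut js s' (T - 1)"
proof -
  have kl: "k < length js" and kP: "k \<notin> P" and kmin: "\<forall>i<length js. i \<notin> P \<longrightarrow> ra (js!k) \<le> ra (js!i)"
    using K unfolding Kok_def by blast+
  have S0: "DPm js s P" "PROCm js s (insert k P)" "GST js s P" "regs (length js) s"
    "rreg s 5 = 0" "nreg s 7 = T" "card P + T = length js" "0 < T" "0 \<le> rreg s 3"
    "(nreg s 13 = 0 \<and> rreg s 3 = 0) \<or>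
      (nreg s 13 \<noteq> 0 \<and> nreg s 13 - 1 < length js \<and> rel js (nreg s 13 - 1) k \<and> rreg s 3 = ov js s (nreg s 13 - 1))"
    "\<forall>i<length js. rel js i k \<longrightarrow> ov js s i \<le> rreg s 3"
    using S unfolding OsSt_def by blast+
  note D = S0(1)[unfolded DPm_def]
  have Psub: "P \<subseteq> {0..<length js}" using D by blast
  have fin: "finite P" using Psub finite_subset by blast
  have wk: "ov js s k = wt (js!k)" using D kl kP by blast
  have relP: "\<And>j. j < length js \<Longrightarrow> rel js j k \<Longrightarrow> j \<in> P"
  proof (rule ccontr)
    fix j assume j: "j < length js" "rel js j k" "j \<notin> P"
    then have "ra (js!k) \<le> ra (js!j)" using kmin by blast
    moreover have "ra (js!j) < ra (js!k)" using rel_less[OF av j(1) kl j(2)] .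
    ultimately show False by linarith
  qed
  have bestP: "\<And>j. j \<in> P \<Longrightarrow> isbest js j (ov js s j)" using D by blast
  have bk: "isbest js k (wt (js!k) + rreg s 3)"
  proof (rule dp_step[OF av kl relP bestP S0(9)])
    show "rreg s 3 = 0 \<or> (\<exists>j. j < length js \<and> rel js j k \<and> rreg s 3 = ov js s j)"
      using S0(10) by blast
  qed (use S0(11) in auto)
  have r20: "\<And>j f. j < length js \<Longrightarrow> f < 4 \<Longrightarrow> rreg s' (5 * length js + 20 + 5 * j + f) = rreg s (5 * length js + 20 + 5 * j + f)"
  proof -
    fix j f :: nat assume "j < length js" "f < 4"
    then have "5 * j + f \<noteq> 5 * k + 4" using addr5 by blast
    then have "5 * length js + 20 + 5 * j + f \<notin> {0, 4, 5 * length js + 20 + 5 * k + 4}" by auto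
    then show "rreg s' (5 * length js + 20 + 5 * j + f) = rreg s (5 * length js + 20 + 5 * j + f)" by (rule Fr)
  qed
  have ovo: "\<And>j. j \<noteq> k \<Longrightarrow> ov js s' j = ov js s j"
  proof -
    fix j assume "j \<noteq> k"
    then have "5 * length js + 20 + 5 * j + 4 \<notin> {0, 4, 5 * length js + 20 + 5 * k + 4}" by auto
    then show "ov js s' j = ov js s j" by (rule Fr)
  qed
  have pvo: "\<And>j. j \<noteq> k \<Longrightarrow> pv js s' j = pv js s j"
  proof -
    fix j assume "j \<noteq> k"
    then have "2 * length js + 20 + j \<notin> {7, 12, 14, 2 * length js + 20 + k}" by auto
    then show "pv js s' j = pv js s j" by (rule Fn)
  qed
  have flo: "\<And>j. j < length js \<Longrightarrow> nreg s' (3 * length js + 20 + j) = nreg s (3 * length js + 20 + j)"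
  proof -
    fix j assume "j < length js"
    then have "3 * length js + 20 + j \<notin> {7, 12, 14, 2 * length js + 20 + k}" using kl by auto
    then show "nreg s' (3 * length js + 20 + j) = nreg s (3 * length js + 20 + j)" by (rule Fn)
  qed
  have pro: "\<And>j. j < length js \<Longrightarrow> nreg s' (length js + 20 + j) = nreg s (length js + 20 + j)"
  proof -
    fix j assume "j < length js"
    then have "length js + 20 + j \<notin> {7, 12, 14, 2 * length js + 20 + k}" using kl by auto
    then show "nreg s' (length js + 20 + j) = nreg s (length js + 20 + j)" by (rule Fn)
  qed
  have ovP: "\<And>j. j \<in> P \<Longrightarrow> ov js s' j = ov js s j"
  proof -
    fix j assume "j \<in> P" then have "j \<noteq> k" using kP by blast
    then show "ov js s' j = ov js s j" by (rule ovo)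
  qed
  let ?P = "insert k P"
  have D1: "\<forall>j<length js. \<forall>f<4. rreg s' (5 * length js + 20 + 5 * j + f) = job_field f (js!j)"
    using D r20 by simp
  have D2: "\<forall>j<length js. j \<notin> ?P \<longrightarrow> ov js s' j = wt (js!j)"
    using D ovo by simp
  have D3: "\<forall>j\<in>?P. isbest js j (ov js s' j)"
  proof
    fix j assume j: "j \<in> ?P"
    show "isbest js j (ov js s' j)"
    proof (cases "j = k")
      case True then show ?thesis using bk p(3) by simp
    next
      case False
      then have "j \<in> P" using j by simp
      then show ?thesis using bestP ovo[OF False] by simp
    qed
  qed
  have D4: "\<forall>j\<in>?P. (pv js s' j = 0 \<and> ov js s' j = wt (js!j)) \<or>
            (pv js s' j \<noteq> 0 \<and> pv js s' j - 1 \<in> ?P \<and> rel js (pv js s' j - 1) j \<and>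
             ov js s' j = wt (js!j) + ov js s' (pv js s' j - 1))"
  proof
    fix j assume j: "j \<in> ?P"
    show "(pv js s' j = 0 \<and> ov js s' j = wt (js!j)) \<or>
            (pv js s' j \<noteq> 0 \<and> pv js s' j - 1 \<in> ?P \<and> rel js (pv js s' j - 1) j \<and>
             ov js s' j = wt (js!j) + ov js s' (pv js s' j - 1))"
    proof (cases "j = k")
      case True
      show ?thesis
      proof (cases "nreg s 13 = 0")
        case True
        then show ?thesis using S0(10) p(3,4) \<open>j = k\<close> by simp
      next
        case False
        then have q: "nreg s 13 - 1 < length js" "rel js (nreg s 13 - 1) k" "rreg s 3 = ov js s (nreg s 13 - 1)"
          using S0(10) by auto
        have qP: "nreg s 13 - 1 \<in> P" using relP[OF q(1,2)] .
        then have "nreg s 13 - 1 \<noteq> k" using kP by blast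
        then show ?thesis using False q qP p(3,4) \<open>j = k\<close> ovo by simp
      qed
    next
      case False
      then have jP: "j \<in> P" using j by simp
      have old: "(pv js s j = 0 \<and> ov js s j = wt (js!j)) \<or>
            (pv js s j \<noteq> 0 \<and> pv js s j - 1 \<in> P \<and> rel js (pv js s j - 1) j \<and>
             ov js s j = wt (js!j) + ov js s (pv js s j - 1))" using D jP by blast
      have "pv js s j \<noteq> 0 \<Longrightarrow> pv js s j - 1 \<in> P \<Longrightarrow> pv js s j - 1 \<noteq> k" using kP by blast
      then show ?thesis using old pvo[OF False] ovo[OF False] ovo by auto
    qed
  qed
  have D5: "\<forall>j\<in>?P. \<forall>i<length js. i \<notin> ?P \<longrightarrow> ra (js!j) \<le> ra (js!i)"
    using D kmin by auto
  have D6: "\<forall>j<length js. nreg s' (3 * length js + 20 + j) = 0" using D flo by simp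
  have D7: "?P \<subseteq> {0..<length js}" using Psub kl by auto
  have DP': "DPm js s' ?P" unfolding DPm_def using D1 D2 D3 D4 D5 D6 D7 by blast
  have PR': "PROCm js s' ?P" using S0(2) pro unfolding PROCm_def by simp
  have G: "0 \<le> rreg s 4" "(nreg s 14 = 0 \<and> rreg s 4 = 0) \<or> (nreg s 14 \<noteq> 0 \<and> nreg s 14 - 1 \<in> P \<and> rreg s 4 = ov js s (nreg s 14 - 1))"
     "\<forall>j\<in>P. ov js s j \<le> rreg s 4" using S0(3) unfolding GST_def by blast+
  have GST': "GST js s' ?P"
  proof (cases "wt (js!k) + rreg s 3 \<le> rreg s 4")
    case True
    then have u: "nreg s' 14 = nreg s 14" "rreg s' 4 = rreg s 4" using nup by blast+
    have a: "\<forall>j\<in>?P. ov js s' j \<le> rreg s' 4" using G(3) ovP True p(3) u by auto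
    have b: "nreg s 14 \<noteq> 0 \<Longrightarrow> nreg s 14 - 1 \<in> P \<Longrightarrow> nreg s 14 - 1 \<noteq> k" using kP by blast
    show ?thesis unfolding GST_def using a u G(1,2) ovP by auto
  next
    case False
    then have u: "nreg s' 14 = Suc k" "rreg s' 4 = wt (js!k) + rreg s 3" using up by blast+
    have a: "\<forall>j\<in>?P. ov js s' j \<le> rreg s' 4" using G(3) ovP False p(3) u by force
    show ?thesis unfolding GST_def using a u p(3) G(1) False by auto
  qed
  have rg: "regs (length js) s'" using S0(4) Fn kl unfolding regs_def by simp
  have r5: "rreg s' 5 = 0" using Fr S0(5) by simp
  have cd: "card ?P + (T - 1) = length js" using S0(7,8) fin kP by simp
  show ?thesis unfolding IOut_def using p(1,2) rg r5 cd DP' PR' GST' by blast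
qed


lemma oend_blk:
  assumes av: "allvalid js" and S: "OsSt js P T k s (length js) 79" and K: "Kok js P k"
  shows "reach prog s (\<lambda>s'. IOut js s' (T - 1)) 12"
proof -
  have R: "regs (length js) s" "pc s = 79" "nreg s 10 = k" "nreg s 11 = 5 * length js + 20 + 5 * k" "rreg s 5 = 0"
    "DPm js s P" "nreg s 7 = T"
    using S unfolding OsSt_def by blast+
  have kl: "k < length js" and kP: "k \<notin> P" using K unfolding Kok_def by blast+
  have wk: "ov js s k = wt (js!k)" using R(6) kl kP unfolding DPm_def by blast
  define POST where "POST = (\<lambda>s'. pc s' = 28 \<and> nreg s' 7 = T - 1 \<and> ov js s' k = wt (js!k) + rreg s 3 \<and> pv js s' k = nreg s 13 \<and>
    (\<forall>x. x \<notin> {7, 12, 14, 2 * length js + 20 + k} \<longrightarrow> nreg s' x = nreg s x) \<and>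
    (\<forall>x. x \<notin> {0, 4, 5 * length js + 20 + 5 * k + 4} \<longrightarrow> rreg s' x = rreg s x) \<and>
    (\<not> wt (js!k) + rreg s 3 \<le> rreg s 4 \<longrightarrow> nreg s' 14 = Suc k \<and> rreg s' 4 = wt (js!k) + rreg s 3) \<and>
    (wt (js!k) + rreg s 3 \<le> rreg s 4 \<longrightarrow> nreg s' 14 = nreg s 14 \<and> rreg s' 4 = rreg s 4))"
  have "reach prog s POST 12"
  proof (cases "wt (js!k) + rreg s 3 \<le> rreg s 4")
    case True
    have "reach prog s POST 10"
      using R(1,2,3,4,5,7) wk True unfolding regs_def POST_def
      apply -
      apply (rule reach_exec, simp add: symb, simp add: symb, simp, simp add: symb)+ apply (rule reach_stop)
      apply simp
      done
    then show ?thesis by (rule reach_mono) auto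
  next
    case False
    show "reach prog s POST 12"
      using R(1,2,3,4,5,7) wk False unfolding regs_def POST_def
      apply -
      apply (rule reach_exec, simp add: symb, simp add: symb, simp, simp add: symb)+ apply (rule reach_stop)
      apply simp
      done
  qed
  then show ?thesis
  proof (rule reach_mono)
    fix s' assume "POST s'"
    then show "IOut js s' (T - 1)" unfolding POST_def
      by (intro oend_inv[OF av S K]) auto
  qed simp
qed


definition IR :: "job list \<Rightarrow> real \<Rightarrow> mstate \<Rightarrow> nat \<Rightarrow> bool" where
  "IR js G s m \<longleftrightarrow> (\<exists>V. m = length js - card V \<and> pc s = 92 \<and> regs (length js) s \<and>
     (\<forall>j<length js. (pv js s j = 0 \<and> ov js s j = wt (js!j)) \<or>
            (pv js s j \<noteq> 0 \<and> pv js s j - 1 < length js \<and> rel js (pv js s j - 1) j \<and>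
             ov js s j = wt (js!j) + ov js s (pv js s j - 1))) \<and>
     (\<forall>S. feasible js S \<longrightarrow> weight js S \<le> G) \<and>
     V \<subseteq> {0..<length js} \<and> chain js V \<and>
     (\<forall>j<length js. nreg s (3 * length js + 20 + j) = (if j \<in> V then 1 else 0)) \<and>
     (nreg s 10 = 0 \<or> (nreg s 10 - 1 < length js \<and> nreg s 10 - 1 \<notin> V \<and> (\<forall>v\<in>V. rel js (nreg s 10 - 1) v))) \<and>
     weight js V + (if nreg s 10 = 0 then 0 else ov js s (nreg s 10 - 1)) = G)"

lemma sel_loop: "ISel js P T s m \<Longrightarrow> reach prog s (\<lambda>s'. SelSt js P T s' (length js) 48) (m * 15 + 2)"
  by (rule reach_loop[where I = "ISel js P T"]) (rule sel_step)

lemma os_loop: "IOs js P T k s m \<Longrightarrow> reach prog s (\<lambda>s'. OsSt js P T k s' (length js) 79) (m * 19 + 2)"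
  by (rule reach_loop[where I = "IOs js P T k"]) (rule os_step)

lemma outer_body:
  assumes av: "allvalid js" and O: "IOut js s m" and m: "0 < m"
  shows "reach prog s (\<lambda>s'. IOut js s' (m - 1)) (4 + (length js * 15 + 2) + 10 + (length js * 19 + 2) + 12)"
proof -
  obtain P where R: "pc s = 28" "regs (length js) s" "rreg s 5 = 0" "nreg s 7 = m"
     "card P + m = length js" "DPm js s P" "PROCm js s P" "GST js s P"
    using O unfolding IOut_def by blast
  have "reach prog s (\<lambda>s'. pc s' = 32 \<and> FR s s' {8,9,10} {} \<and> nreg s' 8 = 0 \<and> nreg s' 9 = 5 * length js + 20 \<and> nreg s' 10 = 0) 4"
    using R(1,2,4) m unfolding regs_def
    apply -
    apply (rule reach_exec, simp add: symb, simp add: symb, simp, simp add: symb)+ apply (rule reach_stop)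
    apply (simp add: FR_def)
    done
  then have h: "reach prog s (\<lambda>s'. ISel js P m s' (length js)) 4"
  proof (rule reach_mono)
    fix s' assume a: "pc s' = 32 \<and> FR s s' {8,9,10} {} \<and> nreg s' 8 = 0 \<and> nreg s' 9 = 5 * length js + 20 \<and> nreg s' 10 = 0"
    then have F: "FR s s' {8,9,10} {}" by blast
    have F1: "\<forall>x\<in>{8,9,10::nat}. x < 16" "\<forall>x\<in>{}::nat set. x < 20" "\<forall>x\<in>{8,9,10::nat}. x < 16 \<and> x \<noteq> 14" "\<forall>x\<in>{}::nat set. x < 20 \<and> x \<noteq> 4"
      "\<forall>x\<in>{8,9,10::nat}. x \<notin> {0,1,2,3,4,5,6,15}" by auto
    have D: "DPm js s' P" "PROCm js s' P" "GST js s' P" "regs (length js) s'"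
      using FR_DPm[OF F F1(1,2) R(6)] FR_PROCm[OF F F1(1) R(7)] FR_GST[OF F F1(3,4) R(8)] FR_regs[OF F F1(5) R(2)]
      by blast+
    have o: "rreg s' 5 = 0" "nreg s' 7 = m" using F R(3,4) unfolding FR_def by auto
    have "SelSt js P m s' 0 32" unfolding SelSt_def using a D o R(5) m by simp
    then show "ISel js P m s' (length js)" unfolding ISel_def by (metis minus_nat.diff_0)
  qed simp
  have h2: "reach prog s (\<lambda>s'. SelSt js P m s' (length js) 48) (4 + (length js * 15 + 2))"
    using h by (rule reach_trans) (rule sel_loop)
  have h3: "reach prog s (\<lambda>s'. \<exists>k. Kok js P k \<and> IOs js P m k s' (length js)) (4 + (length js * 15 + 2) + 10)"
    using h2 by (rule reach_trans) (rule send_blk)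
  have h4: "reach prog s (\<lambda>s'. \<exists>k. Kok js P k \<and> OsSt js P m k s' (length js) 79) (4 + (length js * 15 + 2) + 10 + (length js * 19 + 2))"
    using h3
  proof (rule reach_trans)
    fix s' assume "\<exists>k. Kok js P k \<and> IOs js P m k s' (length js)"
    then obtain k where k: "Kok js P k" "IOs js P m k s' (length js)" by blast
    show "reach prog s' (\<lambda>s'. \<exists>k. Kok js P k \<and> OsSt js P m k s' (length js) 79) (length js * 19 + 2)"
      using os_loop[OF k(2)] by (rule reach_mono) (use k(1) in auto)
  qed
  show ?thesis
    using h4
  proof (rule reach_trans)
    fix s' assume "\<exists>k. Kok js P k \<and> OsSt js P m k s' (length js) 79"
    then obtain k where k: "Kok js P k" "OsSt js P m k s' (length js) 79" by blast
    show "reach prog s' (\<lambda>s'. IOut js s' (m - 1)) 12" by (rule oend_blk[OF av k(2) k(1)])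
  qed
qed

lemma outer_exit:
  assumes av: "allvalid js" and O: "IOut js s 0"
  shows "reach prog s (\<lambda>s'. \<exists>G. IR js G s' (length js)) 2"
proof -
  obtain P where R: "pc s = 28" "regs (length js) s" "rreg s 5 = 0" "nreg s 7 = 0"
     "card P + 0 = length js" "DPm js s P" "PROCm js s P" "GST js s P"
    using O unfolding IOut_def by blast
  have Psub: "P \<subseteq> {0..<length js}" using R(6) unfolding DPm_def by blast
  have PA: "P = {0..<length js}" using Psub R(5)
    by (metis add_0_right card_atLeastLessThan card_subset_eq diff_zero finite_atLeastLessThan)
  have best: "\<And>j. j < length js \<Longrightarrow> isbest js j (ov js s j)" using R(6) PA unfolding DPm_def by auto
  have pred: "\<forall>j<length js. (pv js s j = 0 \<and> ov js s j = wt (js!j)) \<or>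
            (pv js s j \<noteq> 0 \<and> pv js s j - 1 < length js \<and> rel js (pv js s j - 1) j \<and>
             ov js s j = wt (js!j) + ov js s (pv js s j - 1))" using R(6) PA unfolding DPm_def by auto
  have fl: "\<forall>j<length js. nreg s (3 * length js + 20 + j) = 0" using R(6) unfolding DPm_def by blast
  have G: "0 \<le> rreg s 4" "(nreg s 14 = 0 \<and> rreg s 4 = 0) \<or> (nreg s 14 \<noteq> 0 \<and> nreg s 14 - 1 < length js \<and> rreg s 4 = ov js s (nreg s 14 - 1))"
     "\<forall>j<length js. ov js s j \<le> rreg s 4" using R(8) PA unfolding GST_def by auto
  have opt: "\<forall>S. feasible js S \<longrightarrow> weight js S \<le> rreg s 4"
    using best_bound[OF av best] G(1,3) by blast
  have "reach prog s (\<lambda>s'. pc s' = 92 \<and> FR s s' {10} {} \<and> nreg s' 10 = nreg s 14) 2"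
    using R(1,2,4) unfolding regs_def
    apply -
    apply (rule reach_exec, simp add: symb, simp add: symb, simp, simp add: symb)+ apply (rule reach_stop)
    apply (simp add: FR_def)
    done
  then show ?thesis
  proof (rule reach_mono)
    fix s' assume a: "pc s' = 92 \<and> FR s s' {10} {} \<and> nreg s' 10 = nreg s 14"
    have Fn: "\<And>x. x \<noteq> 10 \<Longrightarrow> nreg s' x = nreg s x" and Fr: "\<And>x. rreg s' x = rreg s x"
      using a unfolding FR_def by auto
    have rg: "regs (length js) s'" using R(2) Fn unfolding regs_def by simp
    have "IR js (rreg s 4) s' (length js)"
      unfolding IR_def
      apply (rule exI[of _ "{}"])
      using a rg pred opt fl G(2) Fn Fr
      by (auto simp: chain_def weight_def)
    then show "\<exists>G. IR js G s' (length js)" by blast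
  qed simp
qed


definition IW :: "job list \<Rightarrow> nat set \<Rightarrow> mstate \<Rightarrow> nat \<Rightarrow> bool" where
  "IW js V s m \<longleftrightarrow> m = nreg s 8 \<and> pc s = 100 \<and> nreg s 8 \<le> length js \<and> nreg s 0 = length js \<and>
     nreg s 6 = 3 * length js + 20 \<and> nreg s 15 = 0 \<and> nreg s 1 = 1 \<and>
     (\<forall>j<length js. nreg s (3 * length js + 20 + j) = (if j \<in> V then 1 else 0)) \<and>
     (\<forall>x. nreg s 8 < x \<and> x \<le> length js \<and> 15 < x \<longrightarrow> nreg s x = (if x - 1 \<in> V then 1 else 0)) \<and>
     optimal js V"

lemma recon_step:
  assumes av: "allvalid js" and I: "IR js G s m"
  shows "reach prog s (\<lambda>s'. \<exists>V. IW js V s' (length js)) 2 \<or> (0 < m \<and> reach prog s (\<lambda>s'. IR js G s' (m - 1)) 7)"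
proof -
  obtain V where R: "m = length js - card V" "pc s = 92" "regs (length js) s"
     "\<forall>j<length js. (pv js s j = 0 \<and> ov js s j = wt (js!j)) \<or>
            (pv js s j \<noteq> 0 \<and> pv js s j - 1 < length js \<and> rel js (pv js s j - 1) j \<and>
             ov js s j = wt (js!j) + ov js s (pv js s j - 1))"
     "\<forall>S. feasible js S \<longrightarrow> weight js S \<le> G"
     "V \<subseteq> {0..<length js}" "chain js V"
     "\<forall>j<length js. nreg s (3 * length js + 20 + j) = (if j \<in> V then 1 else 0)"
     "nreg s 10 = 0 \<or> (nreg s 10 - 1 < length js \<and> nreg s 10 - 1 \<notin> V \<and> (\<forall>v\<in>V. rel js (nreg s 10 - 1) v))"
     "weight js V + (if nreg s 10 = 0 then 0 else ov js s (nreg s 10 - 1)) = G"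
    using I unfolding IR_def by blast
  have finV: "finite V" using R(6) finite_subset by blast
  show ?thesis
  proof (cases "nreg s 10 = 0")
    case True
    have "reach prog s (\<lambda>s'. pc s' = 100 \<and> FR s s' {8} {} \<and> nreg s' 8 = length js) 2"
      using R(2,3) True unfolding regs_def
      apply -
      apply (rule reach_exec, simp add: symb, simp add: symb, simp, simp add: symb)+ apply (rule reach_stop)
      apply (simp add: FR_def)
      done
    then have "reach prog s (\<lambda>s'. \<exists>V. IW js V s' (length js)) 2"
    proof (rule reach_mono)
      fix s' assume a: "pc s' = 100 \<and> FR s s' {8} {} \<and> nreg s' 8 = length js"
      have Fn: "\<And>x. x \<noteq> 8 \<Longrightarrow> nreg s' x = nreg s x" using a unfolding FR_def by auto
      have wV: "weight js V = G" using R(10) True by simp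
      have opt: "optimal js V" unfolding optimal_def using feasible_chain[OF av] R(7) R(5) wV by auto
      have "IW js V s' (length js)" unfolding IW_def using a Fn R(3,8) opt unfolding regs_def by auto
      then show "\<exists>V. IW js V s' (length js)" by blast
    qed simp
    then show ?thesis by blast
  next
    case False
    then obtain c where c: "nreg s 10 = Suc c" using not0_implies_Suc by blast
    have cc: "c < length js" "c \<notin> V" "\<forall>v\<in>V. rel js c v" using R(9) c by auto
    have ne: "3 * length js + 20 + c \<noteq> 2 * length js + 20 + c" using cc(1) by (cases js) auto
    have "reach prog s (\<lambda>s'. pc s' = 92 \<and> nreg s' 10 = pv js s c \<and> nreg s' (3 * length js + 20 + c) = 1 \<and>
        (\<forall>x. x \<notin> {10, 12, 13, 3 * length js + 20 + c} \<longrightarrow> nreg s' x = nreg s x) \<and> rreg s' = rreg s) 7"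
      using R(2,3) c ne unfolding regs_def
      apply -
      apply (rule reach_exec, simp add: symb, simp add: symb, simp, simp add: symb)+ apply (rule reach_stop)
      apply simp
      done
    then have "reach prog s (\<lambda>s'. IR js G s' (m - 1)) 7"
    proof (rule reach_mono)
      fix s' :: mstate assume a: "pc s' = 92 \<and> nreg s' 10 = pv js s c \<and> nreg s' (3 * length js + 20 + c) = 1 \<and>
        (\<forall>x. x \<notin> {10, 12, 13, 3 * length js + 20 + c} \<longrightarrow> nreg s' x = nreg s x) \<and> rreg s' = rreg s"
      have Fn: "\<And>x. x \<notin> {10, 12, 13, 3 * length js + 20 + c} \<Longrightarrow> nreg s' x = nreg s x" using a by blast
      have rr: "rreg s' = rreg s" using a by blast
      have pvs: "\<And>j. j < length js \<Longrightarrow> pv js s' j = pv js s j"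
      proof -
        fix j assume "j < length js"
        then have "2 * length js + 20 + j \<notin> {10, 12, 13, 3 * length js + 20 + c}" using cc(1) by auto
        then show "pv js s' j = pv js s j" by (rule Fn)
      qed
      have fls: "\<And>j. j < length js \<Longrightarrow> nreg s' (3 * length js + 20 + j) = (if j \<in> insert c V then 1 else 0)"
      proof -
        fix j assume j: "j < length js"
        show "nreg s' (3 * length js + 20 + j) = (if j \<in> insert c V then 1 else 0)"
        proof (cases "j = c")
          case True then show ?thesis using a by simp
        next
          case False
          then have "3 * length js + 20 + j \<notin> {10, 12, 13, 3 * length js + 20 + c}" by auto
          then show ?thesis using Fn R(8) j False by simp
        qed
      qed
      have rg: "regs (length js) s'" using R(3) Fn cc(1) unfolding regs_def by simp
      have pred: "(pv js s c = 0 \<and> ov js s c = wt (js!c)) \<or>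
            (pv js s c \<noteq> 0 \<and> pv js s c - 1 < length js \<and> rel js (pv js s c - 1) c \<and>
             ov js s c = wt (js!c) + ov js s (pv js s c - 1))" using R(4) cc(1) by blast
      have wI: "weight js (insert c V) = wt (js!c) + weight js V" using weight_insert[OF finV cc(2)] .
      have ch: "chain js (insert c V)" using R(6,7) cc unfolding chain_def by auto
      have card: "card (insert c V) = Suc (card V)" using finV cc(2) by simp
      have G0: "weight js V + ov js s c = G" using R(10) c by simp
      have cur: "nreg s' 10 = 0 \<or> (nreg s' 10 - 1 < length js \<and> nreg s' 10 - 1 \<notin> insert c V \<and> (\<forall>v\<in>insert c V. rel js (nreg s' 10 - 1) v))"
        and wt': "weight js (insert c V) + (if nreg s' 10 = 0 then 0 else ov js s' (nreg s' 10 - 1)) = G"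
      proof -
        have "(nreg s' 10 = 0 \<or> (nreg s' 10 - 1 < length js \<and> nreg s' 10 - 1 \<notin> insert c V \<and> (\<forall>v\<in>insert c V. rel js (nreg s' 10 - 1) v))) \<and>
          weight js (insert c V) + (if nreg s' 10 = 0 then 0 else ov js s' (nreg s' 10 - 1)) = G"
        proof (cases "pv js s c = 0")
          case True
          then show ?thesis using pred a wI G0 by simp
        next
          case False
          then have q: "pv js s c - 1 < length js" "rel js (pv js s c - 1) c" "ov js s c = wt (js!c) + ov js s (pv js s c - 1)"
            using pred by auto
          define q0 where "q0 = pv js s c - 1"
          have q0: "q0 < length js" "rel js q0 c" using q unfolding q0_def by auto
          have nq: "q0 \<noteq> c" using rel_irrefl[OF av cc(1)] q0 by blast
          have nqV: "q0 \<notin> V"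
          proof
            assume "q0 \<in> V"
            then have "rel js c q0" using cc(3) by blast
            then show False using rel_less[OF av cc(1) q0(1)] rel_less[OF av q0(1) cc(1) q0(2)] by linarith
          qed
          have rq: "\<forall>v\<in>insert c V. rel js q0 v"
          proof
            fix v assume v: "v \<in> insert c V"
            show "rel js q0 v"
            proof (cases "v = c")
              case True then show ?thesis using q0 by simp
            next
              case False
              then have "v \<in> V" using v by simp
              then have "rel js c v" "v < length js" using cc(3) R(6) by auto
              then show ?thesis using rel_trans[OF av q0(1) cc(1) _ q0(2)] by blast
            qed
          qed
          show ?thesis using False a q(3) wI G0 nq nqV rq q0(1) unfolding q0_def by simp
        qed
        then show "nreg s' 10 = 0 \<or> (nreg s' 10 - 1 < length js \<and> nreg s' 10 - 1 \<notin> insert c V \<and> (\<forall>v\<in>insert c V. rel js (nreg s' 10 - 1) v))"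
          and "weight js (insert c V) + (if nreg s' 10 = 0 then 0 else ov js s' (nreg s' 10 - 1)) = G" by blast+
      qed
      have m1: "m - 1 = length js - card (insert c V)" using card R(1) by simp
      have pr': "\<forall>j<length js. (pv js s' j = 0 \<and> ov js s' j = wt (js!j)) \<or>
            (pv js s' j \<noteq> 0 \<and> pv js s' j - 1 < length js \<and> rel js (pv js s' j - 1) j \<and>
             ov js s' j = wt (js!j) + ov js s' (pv js s' j - 1))" using R(4) pvs rr by simp
      have sub: "insert c V \<subseteq> {0..<length js}" using R(6) cc(1) by simp
      have fl': "\<forall>j<length js. nreg s' (3 * length js + 20 + j) = (if j \<in> insert c V then 1 else 0)"
        using fls by blast
      show "IR js G s' (m - 1)"
        unfolding IR_def
        apply (rule exI[of _ "insert c V"])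
        apply (intro conjI)
        apply (rule m1)
        using a apply blast
        apply (rule rg)
        apply (rule pr')
        apply (rule R(5))
        apply (rule sub)
        apply (rule ch)
        apply (rule fl')
        apply (rule cur)
        apply (rule wt')
        done
    qed simp
    moreover have "0 < m"
    proof -
      have "V \<subseteq> {0..<length js} - {c}" using R(6) cc(2) by blast
      then have "card V \<le> card ({0..<length js} - {c})" by (intro card_mono) auto
      also have "\<dots> = length js - 1" using cc(1) by (simp add: card_Diff_singleton)
      finally show ?thesis using R(1) cc(1) by linarith
    qed
    ultimately show ?thesis by blast
  qed
qed


definition Final :: "job list \<Rightarrow> mstate \<Rightarrow> bool" where
  "Final js s \<longleftrightarrow> halted prog s \<and> optimal js (out_set (length js) s)"

lemma r15: "(r::nat) \<ge> 1 \<Longrightarrow> r \<le> 15 \<Longrightarrow> r = 1 \<or> r = 2 \<or> r = 3 \<or> r = 4 \<or> r = 5 \<or> r = 6 \<or> r = 7 \<or> r = 8 \<or> r = 9 \<or> r = 10 \<or> r = 11 \<or> r = 12 \<or> r = 13 \<or> r = 14 \<or> r = 15"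
  by presburger

lemma w_step:
  assumes I: "IW js V s m"
  shows "reach prog s (Final js) 34 \<or> (0 < m \<and> reach prog s (\<lambda>s'. IW js V s' (m - 1)) 9)"
proof -
  have R: "m = nreg s 8" "pc s = 100" "nreg s 8 \<le> length js" "nreg s 0 = length js"
     "nreg s 6 = 3 * length js + 20" "nreg s 15 = 0" "nreg s 1 = 1"
     "\<forall>j<length js. nreg s (3 * length js + 20 + j) = (if j \<in> V then 1 else 0)"
     "\<forall>x. nreg s 8 < x \<and> x \<le> length js \<and> 15 < x \<longrightarrow> nreg s x = (if x - 1 \<in> V then 1 else 0)"
     "optimal js V"
    using I unfolding IW_def by blast+
  have Vs: "V \<subseteq> {0..<length js}" using R(10) unfolding optimal_def feasible_def by blast
  show ?thesis
  proof (cases "nreg s 8 \<le> 15")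
    case True
    have "reach prog s (\<lambda>s'. pc s' = 140 \<and> (\<forall>x>15. nreg s' x = nreg s x) \<and> nreg s' 1 = nreg s (3 * length js + 20 + 0) \<and> nreg s' 2 = nreg s (3 * length js + 20 + 1) \<and> nreg s' 3 = nreg s (3 * length js + 20 + 2) \<and> nreg s' 4 = nreg s (3 * length js + 20 + 3) \<and> nreg s' 5 = nreg s (3 * length js + 20 + 4) \<and> nreg s' 6 = nreg s (3 * length js + 20 + 5) \<and> nreg s' 7 = nreg s (3 * length js + 20 + 6) \<and> nreg s' 8 = nreg s (3 * length js + 20 + 7) \<and> nreg s' 9 = nreg s (3 * length js + 20 + 8) \<and> nreg s' 10 = nreg s (3 * length js + 20 + 9) \<and> nreg s' 11 = nreg s (3 * length js + 20 + 10) \<and> nreg s' 12 = nreg s (3 * length js + 20 + 11) \<and> nreg s' 13 = nreg s (3 * length js + 20 + 12) \<and> nreg s' 14 = nreg s (3 * length js + 20 + 13) \<and> nreg s' 15 = nreg s (3 * length js + 20 + 14)) 34"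
      using R(2,5,6) True
      apply -
      apply (rule reach_exec, simp add: symb, simp add: symb, simp, simp add: symb)+ apply (rule reach_stop)
      apply simp
      done
    then have "reach prog s (Final js) 34"
    proof (rule reach_mono)
      fix s' :: mstate assume a: "pc s' = 140 \<and> (\<forall>x>15. nreg s' x = nreg s x) \<and> nreg s' 1 = nreg s (3 * length js + 20 + 0) \<and> nreg s' 2 = nreg s (3 * length js + 20 + 1) \<and> nreg s' 3 = nreg s (3 * length js + 20 + 2) \<and> nreg s' 4 = nreg s (3 * length js + 20 + 3) \<and> nreg s' 5 = nreg s (3 * length js + 20 + 4) \<and> nreg s' 6 = nreg s (3 * length js + 20 + 5) \<and> nreg s' 7 = nreg s (3 * length js + 20 + 6) \<and> nreg s' 8 = nreg s (3 * length js + 20 + 7) \<and> nreg s' 9 = nreg s (3 * length js + 20 + 8) \<and> nreg s' 10 = nreg s (3 * length js + 20 + 9) \<and> nreg s' 11 = nreg s (3 * length js + 20 + 10) \<and> nreg s' 12 = nreg s (3 * length js + 20 + 11) \<and> nreg s' 13 = nreg s (3 * length js + 20 + 12) \<and> nreg s' 14 = nreg s (3 * length js + 20 + 13) \<and> nreg s' 15 = nreg s (3 * length js + 20 + 14)"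
      have lo: "\<And>r. 1 \<le> r \<Longrightarrow> r \<le> 15 \<Longrightarrow> nreg s' r = nreg s (3 * length js + 20 + (r - 1))"
      proof -
        fix r :: nat assume "1 \<le> r" "r \<le> 15"
        then have "r = 1 \<or> r = 2 \<or> r = 3 \<or> r = 4 \<or> r = 5 \<or> r = 6 \<or> r = 7 \<or> r = 8 \<or> r = 9 \<or> r = 10 \<or> r = 11 \<or> r = 12 \<or> r = 13 \<or> r = 14 \<or> r = 15"
          by (rule r15)
        then show "nreg s' r = nreg s (3 * length js + 20 + (r - 1))" using a by (elim disjE) simp_all
      qed
      have os: "out_set (length js) s' = V"
      proof -
        have "\<And>i. i < length js \<Longrightarrow> (nreg s' (Suc i) \<noteq> 0) = (i \<in> V)"
        proof -
          fix i assume i: "i < length js"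
          show "(nreg s' (Suc i) \<noteq> 0) = (i \<in> V)"
          proof (cases "Suc i \<le> 15")
            case True
            then have "nreg s' (Suc i) = nreg s (3 * length js + 20 + i)" using lo[of "Suc i"] by simp
            then show ?thesis using R(8) i by simp
          next
            case False
            then have "nreg s' (Suc i) = nreg s (Suc i)" using a by simp
            moreover have "nreg s (Suc i) = (if i \<in> V then 1 else 0)" using R(9) True False i by force
            ultimately show ?thesis by simp
          qed
        qed
        then show ?thesis unfolding out_set_def using Vs by auto
      qed
      have h: "halted prog s'" unfolding halted_def using a by (simp add: symb)
      show "Final js s'" unfolding Final_def using h os R(10) by simp
    qed simp
    then show ?thesis by blast
  next
    case False
    have "nreg s 8 = Suc (nreg s 8 - 1)" "15 \<le> nreg s 8 - 1" using False by auto
    then obtain i where i: "nreg s 8 = Suc i" "15 \<le> i" by blast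
    have "reach prog s (\<lambda>s'. pc s' = 100 \<and> nreg s' 8 = i \<and> nreg s' (Suc i) = nreg s (3 * length js + 20 + i) \<and>
       (\<forall>x. x \<notin> {8, 12, 13, Suc i} \<longrightarrow> nreg s' x = nreg s x)) 9"
      using R(2,5,6,7) i
      apply -
      apply (rule reach_exec, simp add: symb, simp add: symb, simp, simp add: symb)+ apply (rule reach_stop)
      apply (simp add: ac_simps)
      done
    then have "reach prog s (\<lambda>s'. IW js V s' (m - 1)) 9"
    proof (rule reach_mono)
      fix s' :: mstate assume a: "pc s' = 100 \<and> nreg s' 8 = i \<and> nreg s' (Suc i) = nreg s (3 * length js + 20 + i) \<and>
       (\<forall>x. x \<notin> {8, 12, 13, Suc i} \<longrightarrow> nreg s' x = nreg s x)"
      have Fn: "\<And>x. x \<notin> {8, 12, 13, Suc i} \<Longrightarrow> nreg s' x = nreg s x" using a by blast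
      have il: "i < length js" using R(3) i by simp
      have b: "nreg s' 0 = length js" "nreg s' 6 = 3 * length js + 20" "nreg s' 15 = 0" "nreg s' 1 = 1"
        using Fn R(4,5,6,7) i by auto
      have fl: "\<forall>j<length js. nreg s' (3 * length js + 20 + j) = (if j \<in> V then 1 else 0)"
      proof (intro allI impI)
        fix j assume j: "j < length js"
        then have "3 * length js + 20 + j \<notin> {8, 12, 13, Suc i}" using il by auto
        then show "nreg s' (3 * length js + 20 + j) = (if j \<in> V then 1 else 0)" using Fn R(8) j by simp
      qed
      have up: "\<forall>x. nreg s' 8 < x \<and> x \<le> length js \<and> 15 < x \<longrightarrow> nreg s' x = (if x - 1 \<in> V then 1 else 0)"
      proof (intro allI impI)
        fix x assume x: "nreg s' 8 < x \<and> x \<le> length js \<and> 15 < x"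
        show "nreg s' x = (if x - 1 \<in> V then 1 else 0)"
        proof (cases "x = Suc i")
          case True then show ?thesis using a R(8) il by simp
        next
          case False
          then have "x \<notin> {8, 12, 13, Suc i}" using x by auto
          then show ?thesis using Fn R(9) x a i False by simp
        qed
      qed
      show "IW js V s' (m - 1)" unfolding IW_def using a b fl up R(1,10) i il by simp
    qed simp
    then show ?thesis using R(1) i by simp
  qed
qed


lemma copy_loop: "ICopy js s m \<Longrightarrow> reach prog s (\<lambda>s'. IOut js s' (length js)) (m * 7 + 5)"
  by (rule reach_loop[where I = "ICopy js"]) (rule copy_step)

lemma outer_loop:
  assumes av: "allvalid js"
  shows "IOut js s m \<Longrightarrow> reach prog s (\<lambda>s'. \<exists>G. IR js G s' (length js)) (m * (4 + (length js * 15 + 2) + 10 + (length js * 19 + 2) + 12) + 2)"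
proof (rule reach_loop[where I = "IOut js"])
  fix s m assume O: "IOut js s m"
  show "reach prog s (\<lambda>s'. \<exists>G. IR js G s' (length js)) 2 \<or>
        (0 < m \<and> reach prog s (\<lambda>s'. IOut js s' (m - 1)) (4 + (length js * 15 + 2) + 10 + (length js * 19 + 2) + 12))"
  proof (cases "m = 0")
    case True then show ?thesis using outer_exit[OF av] O by blast
  next
    case False then show ?thesis using outer_body[OF av O] by blast
  qed
qed

lemma recon_loop:
  assumes av: "allvalid js"
  shows "IR js G s m \<Longrightarrow> reach prog s (\<lambda>s'. \<exists>V. IW js V s' (length js)) (m * 7 + 2)"
  by (rule reach_loop[where I = "IR js G"]) (rule recon_step[OF av])

lemma w_loop: "IW js V s m \<Longrightarrow> reach prog s (Final js) (m * 9 + 34)"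
  by (rule reach_loop[where I = "IW js V"]) (rule w_step)

lemma main_reach:
  assumes av: "allvalid js"
  shows "reach prog (init js) (Final js)
     (17 + (5 * length js * 7 + 5) + (length js * (4 + (length js * 15 + 2) + 10 + (length js * 19 + 2) + 12) + 2)
        + (length js * 7 + 2) + (length js * 9 + 34))"
proof -
  have i: "pc (init js) = 0" "nreg (init js) 0 = length js" "\<forall>x\<ge>1. nreg (init js) x = 0"
    "\<forall>x<5 * length js. rreg (init js) x = orig js x"
    unfolding init_def orig_def by auto
  have h1: "reach prog (init js) (\<lambda>s'. ICopy js s' (5 * length js)) 17" by (rule init_blk[OF i])
  have h2: "reach prog (init js) (\<lambda>s'. IOut js s' (length js)) (17 + (5 * length js * 7 + 5))"
    using h1 by (rule reach_trans) (rule copy_loop)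
  have h3: "reach prog (init js) (\<lambda>s'. \<exists>G. IR js G s' (length js))
     (17 + (5 * length js * 7 + 5) + (length js * (4 + (length js * 15 + 2) + 10 + (length js * 19 + 2) + 12) + 2))"
    using h2 by (rule reach_trans) (rule outer_loop[OF av])
  have h4: "reach prog (init js) (\<lambda>s'. \<exists>V. IW js V s' (length js))
     (17 + (5 * length js * 7 + 5) + (length js * (4 + (length js * 15 + 2) + 10 + (length js * 19 + 2) + 12) + 2)
        + (length js * 7 + 2))"
    using h3 by (rule reach_trans) (use recon_loop[OF av] in blast)
  show ?thesis
    using h4 by (rule reach_trans) (use w_loop in blast)
qed

lemma final_js:
  assumes v: "\<forall>j\<in>set js. valid_job j"
  shows "\<exists>k\<le>200 * (length js + 1) ^ 2. halted prog (run prog k (init js)) \<and>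
          optimal js (out_set (length js) (run prog k (init js)))"
proof -
  have av: "allvalid js" unfolding allvalid_def using v by simp
  define n where "n = length js"
  have bnd: "17 + (5 * n * 7 + 5) + (n * (4 + (n * 15 + 2) + 10 + (n * 19 + 2) + 12) + 2)
      + (n * 7 + 2) + (n * 9 + 34) \<le> 200 * (n + 1) ^ 2"
    by (simp add: power2_eq_square algebra_simps)
  obtain t where t: "t \<le> 17 + (5 * n * 7 + 5) + (n * (4 + (n * 15 + 2) + 10 + (n * 19 + 2) + 12) + 2)
      + (n * 7 + 2) + (n * 9 + 34)" "Final js (run prog t (init js))"
    using main_reach[OF av] unfolding reach_def n_def by blast
  have "t \<le> 200 * (length js + 1) ^ 2" using t(1) bnd unfolding n_def by linarith
  then show ?thesis using t(2) unfolding Final_def by blast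
qed

theorem theorem8:
  shows "\<exists>P. solves_ISC_polytime P"
  unfolding solves_ISC_polytime_def
  by (intro exI[of _ prog] exI[of _ "200::nat"] exI[of _ "2::nat"] allI impI final_js)


end
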